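(* (a) Every $m\in\mathcal N$ has a center, i.e. there is $\xi\in\mathbb R$ with $(m,\bar m'_\xi)_{L^2(d\nu_\xi)}=0$. (b) There are constants $c>0$ and $\delta>0$ such that every $m\in\mathcal M^{(1)}_\delta$ has a unique center $\xi(m)$, and for every $n\in\mathcal M^{(1)}_\delta$ with $\|m-n\|_{L^1(\mathbb R)}$ sufficiently small, $$|\xi(m)-\xi(n)|\le c\,\|m-n\|_{L^1(\mathbb R)} ;$$ similarly, for $\|m-n\|_{L^2}$ sufficiently small, $|\xi(m)-\xi(n)|\le c\,\|m-n\|_{L^2}$.
   Context: $\beta>1$; $J\in C^2(\mathbb R)$ even, $J(r)=0$ for $|r|>1$, $\int J=1$, nonincreasing on $(0,\infty)$; $m_\beta>0$ solves $m_\beta=\tanh(\beta m_\beta)$; $\bar m$ is the increasing antisymmetric solution of $\bar m=\tanh(\beta J*\bar m)$ with $\bar m(x)\to\pm m_\beta$ as $x\to\pm\infty$ ($\bar m'$ decays exponentially); $\bar m_\xi(x)=\bar m(x-\xi)$; $d\nu_\xi=dx/(1-\bar m_\xi^2)$, $(g,h)_{L^2(d\nu_\xi)}=\int gh\,d\nu_\xi$. $\mathcal N=\{m\in L^\infty(\mathbb R,[-1,1]):\ \limsup_{x\to-\infty}m(x)<0,\ \liminf_{x\to+\infty}m(x)>0\}$; $\mathcal M^{(1)}_\delta=\bigcup_{\xi\in\mathbb R}\{m\in L^\infty(\mathbb R,[-1,1]):\|m-\bar m_\xi\|_{L^2}<\delta\}$. A center of $m$ is any $\xi\in\mathbb R$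 with $(m,\bar m'_\xi)_{L^2(d\nu_\xi)}=0$. *)

theory Defs
  imports "HOL-Analysis.Analysis"
begin

text \<open>Elements of L-infinity(R,[-1,1]), represented by Borel measurable functions.\<close>
definition Linf_pm1 :: "(real \<Rightarrow> real) \<Rightarrow> bool" where
  "Linf_pm1 m \<longleftrightarrow> m \<in> borel_measurable lborel \<and> (\<forall>x. \<bar>m x\<bar> \<le> 1)"

definition classN :: "(real \<Rightarrow> real) \<Rightarrow> bool" where
  "classN m \<longleftrightarrow> Linf_pm1 m
     \<and> Limsup at_bot (\<lambda>x. ereal (m x)) < 0
     \<and> Liminf at_top (\<lambda>x. ereal (m x)) > 0"

definition L2sq_dist :: "(real \<Rightarrow> real) \<Rightarrow> (real \<Rightarrow> real) \<Rightarrow> ennreal" where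
  "L2sq_dist m n = (\<integral>\<^sup>+ x. ennreal ((m x - n x)\<^sup>2) \<partial>lborel)"

definition L1_dist :: "(real \<Rightarrow> real) \<Rightarrow> (real \<Rightarrow> real) \<Rightarrow> ennreal" where
  "L1_dist m n = (\<integral>\<^sup>+ x. ennreal \<bar>m x - n x\<bar> \<partial>lborel)"

definition M1 :: "(real \<Rightarrow> real) \<Rightarrow> real \<Rightarrow> (real \<Rightarrow> real) \<Rightarrow> bool" where
  "M1 mbar \<delta> m \<longleftrightarrow> Linf_pm1 m \<and>
     (\<exists>\<xi>. L2sq_dist m (\<lambda>x. mbar (x - \<xi>)) < ennreal (\<delta>\<^sup>2))"

text \<open>xi is a center of m: the L2(d nu_xi) inner product of m with mbar'_xi vanishes.\<close>
definition is_center :: "(real \<Rightarrow> real) \<Rightarrow> (real \<Rightarrow> real) \<Rightarrow> real \<Rightarrow> bool" where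
  "is_center mbar m \<xi> \<longleftrightarrow>
     integrable lborel (\<lambda>x. m x * deriv mbar (x - \<xi>) / (1 - (mbar (x - \<xi>))\<^sup>2)) \<and>
     (LINT x|lborel. m x * deriv mbar (x - \<xi>) / (1 - (mbar (x - \<xi>))\<^sup>2)) = 0"

end

theory Submission
  imports Defs "HOL-Probability.Sinc_Integral"
begin


lemma mvt_bound:
  fixes f f' :: "real \<Rightarrow> real"
  assumes d: "\<And>z. DERIV f z :> f' z"
    and b: "\<And>z. min x y \<le> z \<Longrightarrow> z \<le> max x y \<Longrightarrow> \<bar>f' z\<bar> \<le> B"
  shows "\<bar>f y - f x\<bar> \<le> B * \<bar>y - x\<bar>"
proof (cases x y rule: linorder_cases)
  case less
  then obtain z where z: "x < z" "z < y" "f y - f x = (y - x) * f' z"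
    using MVT2[of x y f f'] d by blast
  have "\<bar>f' z\<bar> \<le> B" using b z by auto
  then show ?thesis using z less by (simp add: abs_mult mult.commute mult_left_mono)
next
  case equal then show ?thesis using b[of x] by auto
next
  case greater
  then obtain z where z: "y < z" "z < x" "f x - f y = (x - y) * f' z"
    using MVT2[of y x f f'] d by blast
  have "\<bar>f' z\<bar> \<le> B" using b z by auto
  then have "\<bar>f x - f y\<bar> \<le> B * \<bar>x - y\<bar>" using z greater by (simp add: abs_mult mult.commute mult_left_mono)
  then show ?thesis by (simp add: abs_minus_commute)
qed

lemma deriv_from_quad:
  fixes f :: "real \<Rightarrow> real"
  assumes q: "\<And>h. \<bar>h\<bar> \<le> 1 \<Longrightarrow> \<bar>f (x + h) - f x - h * D\<bar> \<le> C * h\<^sup>2"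
  shows "DERIV f x :> D"
  unfolding DERIV_def LIM_eq
proof (intro allI impI)
  fix r :: real assume r: "r > 0"
  have C0: "C \<ge> 0" using q[of 1] abs_ge_zero[of "f (x + 1) - f x - 1 * D"] by simp
  define s where "s = min 1 (r / (C + 1))"
  have s: "s > 0" using r C0 by (simp add: s_def)
  show "\<exists>s>0. \<forall>h. h \<noteq> 0 \<and> norm (h - 0) < s \<longrightarrow> norm ((f (x + h) - f x) / h - D) < r"
  proof (intro exI[of _ s] conjI allI impI s)
    fix h :: real assume h: "h \<noteq> 0 \<and> norm (h - 0) < s"
    have h1: "\<bar>h\<bar> \<le> 1" using h by (simp add: s_def)
    have "(f (x + h) - f x) / h - D = (f (x + h) - f x - h * D) / h" using h by (simp add: field_simps)
    then have "\<bar>(f (x + h) - f x) / h - D\<bar> = \<bar>f (x + h) - f x - h * D\<bar> / \<bar>h\<bar>" by simp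
    also have "\<dots> \<le> C * h\<^sup>2 / \<bar>h\<bar>" by (rule divide_right_mono[OF q[OF h1]]) simp
    also have "\<dots> = C * \<bar>h\<bar>" proof -
      have e: "C * h\<^sup>2 = (C * \<bar>h\<bar>) * \<bar>h\<bar>" by (simp add: power2_eq_square)
      show ?thesis using h by (simp add: divide_eq_eq e)
    qed
    also have "\<dots> \<le> C * s" using h C0 by (simp add: mult_left_mono)
    also have "\<dots> < r"
    proof -
      have "C * s \<le> C * (r / (C + 1))" using C0 unfolding s_def by (intro mult_left_mono) auto
      also have "\<dots> < r" using r C0 by (simp add: field_simps)
      finally show ?thesis .
    qed
    finally show "norm ((f (x + h) - f x) / h - D) < r" by simp
  qed
qed

lemma int_bounded_support:
  fixes f :: "real \<Rightarrow> real"
  assumes m: "f \<in> borel_measurable lborel"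
    and b: "\<And>y. \<bar>f y\<bar> \<le> K * indicator {c - R..c + R} y" and R: "R \<ge> 0"
  shows "integrable lborel f" "\<bar>LINT y|lborel. f y\<bar> \<le> K * (2 * R)"
proof -
  have K: "K \<ge> 0" using b[of c] R by (auto simp: indicator_def)
  have i: "integrable lborel (\<lambda>y. K * indicator {c - R..c + R} y)"
    by (intro integrable_mult_right integrable_real_indicator) (auto simp: emeasure_lborel_Icc_eq)
  show fi: "integrable lborel f"
    by (rule Bochner_Integration.integrable_bound[OF i m]) (use b K in \<open>auto\<close>)
  have "\<bar>LINT y|lborel. f y\<bar> \<le> (LINT y|lborel. K * indicator {c - R..c + R} y)"
    by (rule integral_abs_bound_integral[OF fi i]) (use b in auto)
  also have "\<dots> = K * (2 * R)" using R by simp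
  finally show "\<bar>LINT y|lborel. f y\<bar> \<le> K * (2 * R)" .
qed



lemma exp_abs_integrable0:
  fixes b :: real assumes b: "b > 0"
  shows "integrable lborel (\<lambda>x. exp (- b * \<bar>x\<bar>))"
proof -
  define g where "g x = indicator {0<..} x * exp (-(x * b))" for x :: real
  have g: "integrable lborel g"
    using integrable_I0i_exp_mscale[OF b] unfolding set_integrable_def g_def by simp
  have g2: "integrable lborel (\<lambda>x. g (0 + (-1) * x))"
    by (rule lborel_integrable_real_affine[OF g]) simp
  have i: "integrable lborel (\<lambda>x. g x + g (0 + (-1) * x))" using g g2 by simp
  show ?thesis
  proof (rule integrable_cong_AE_imp[OF i])
    show "(\<lambda>x. exp (- b * \<bar>x\<bar>)) \<in> borel_measurable lborel" by measurable
    show "AE x in lborel. g x + g (0 + - 1 * x) = exp (- b * \<bar>x\<bar>)"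
      using AE_lborel_singleton[of 0]
      by eventually_elim (auto simp: g_def indicator_def)
  qed
qed

lemma exp_abs_integrable:
  fixes b c :: real assumes b: "b > 0"
  shows "integrable lborel (\<lambda>x. exp (- b * \<bar>x - c\<bar>))"
  using lborel_integrable_real_affine[OF exp_abs_integrable0[OF b], of 1 "- c"] by simp

lemma exp_abs_integral:
  fixes b c :: real
  shows "(LINT x|lborel. exp (- b * \<bar>x - c\<bar>)) = (LINT x|lborel. exp (- b * \<bar>x\<bar>))"
  using lborel_integral_real_affine[of 1 "\<lambda>x. exp (- b * \<bar>x - c\<bar>)" c] by simp

lemma cs_bound:
  fixes h g :: "real \<Rightarrow> real"
  assumes hm: "h \<in> borel_measurable lborel" and gm: "g \<in> borel_measurable lborel"
    and hi: "integrable lborel (\<lambda>x. (h x)\<^sup>2)" and gi: "integrable lborel (\<lambda>x. (g x)\<^sup>2)"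
    and hA: "(LINT x|lborel. (h x)\<^sup>2) \<le> A\<^sup>2" and gB: "(LINT x|lborel. (g x)\<^sup>2) \<le> B\<^sup>2"
    and A: "A > 0" and B: "B > 0"
  shows "integrable lborel (\<lambda>x. h x * g x)" "\<bar>LINT x|lborel. h x * g x\<bar> \<le> A * B"
proof -
  define t where "t = B / A"
  have t: "t > 0" using A B by (simp add: t_def)
  have pw: "\<bar>h x * g x\<bar> \<le> (t * (h x)\<^sup>2 + (g x)\<^sup>2 / t) / 2" for x
  proof -
    have "0 \<le> (t * \<bar>h x\<bar> - \<bar>g x\<bar>)\<^sup>2" by simp
    then have "2 * t * \<bar>h x * g x\<bar> \<le> t\<^sup>2 * (h x)\<^sup>2 + (g x)\<^sup>2"
      by (simp add: power2_eq_square algebra_simps abs_mult)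
    then have "\<bar>h x * g x\<bar> \<le> (t\<^sup>2 * (h x)\<^sup>2 + (g x)\<^sup>2) / (2 * t)"
      using t by (simp add: field_simps)
    also have "\<dots> = (t * (h x)\<^sup>2 + (g x)\<^sup>2 / t) / 2" using t by (simp add: field_simps power2_eq_square)
    finally show ?thesis .
  qed
  have bi: "integrable lborel (\<lambda>x. (t * (h x)\<^sup>2 + (g x)\<^sup>2 / t) / 2)"
    using hi gi by simp
  show hgi: "integrable lborel (\<lambda>x. h x * g x)"
  proof (rule Bochner_Integration.integrable_bound[OF bi])
    show "(\<lambda>x. h x * g x) \<in> borel_measurable lborel" using hm gm by simp
    show "AE x in lborel. norm (h x * g x) \<le> norm ((t * (h x)\<^sup>2 + (g x)\<^sup>2 / t) / 2)"
    proof (rule AE_I2)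
      fix x
      have "\<bar>h x * g x\<bar> \<le> \<bar>(t * (h x)\<^sup>2 + (g x)\<^sup>2 / t) / 2\<bar>"
        using pw[of x] by linarith
      then show "norm (h x * g x) \<le> norm ((t * (h x)\<^sup>2 + (g x)\<^sup>2 / t) / 2)" by simp
    qed
  qed
  have "\<bar>LINT x|lborel. h x * g x\<bar> \<le> (LINT x|lborel. (t * (h x)\<^sup>2 + (g x)\<^sup>2 / t) / 2)"
    by (rule integral_abs_bound_integral[OF hgi bi]) (use pw in auto)
  also have "\<dots> = (t * (LINT x|lborel. (h x)\<^sup>2) + (LINT x|lborel. (g x)\<^sup>2) / t) / 2"
    using hi gi by simp
  also have "\<dots> \<le> (t * A\<^sup>2 + B\<^sup>2 / t) / 2"
    using hA gB t by (intro divide_right_mono add_mono mult_left_mono) auto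
  also have "\<dots> = A * B" using A B by (simp add: t_def field_simps power2_eq_square)
  finally show "\<bar>LINT x|lborel. h x * g x\<bar> \<le> A * B" .
qed

lemma nn_to_real:
  fixes f :: "real \<Rightarrow> real"
  assumes fm: "f \<in> borel_measurable lborel" and nn: "\<And>x. f x \<ge> 0"
    and fin: "(\<integral>\<^sup>+ x. ennreal (f x) \<partial>lborel) < ennreal D"
  shows "integrable lborel f" "(\<integral>\<^sup>+ x. ennreal (f x) \<partial>lborel) = ennreal (LINT x|lborel. f x)"
    "(LINT x|lborel. f x) < D"
proof -
  show fi: "integrable lborel f"
    by (rule integrableI_nonneg[OF fm]) (use nn fin in \<open>auto simp: top.not_eq_extremum less_le_trans\<close>)
  show eq: "(\<integral>\<^sup>+ x. ennreal (f x) \<partial>lborel) = ennreal (LINT x|lborel. f x)"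
    by (rule nn_integral_eq_integral[OF fi]) (use nn in auto)
  have "0 \<le> (LINT x|lborel. f x)" using nn by simp
  then show "(LINT x|lborel. f x) < D" using fin unfolding eq
    by (metis ennreal_less_iff ennreal_neg leD le_less_linear not_less_zero ennreal_less_zero_iff)
qed



lemma cont_bound_supp:
  fixes g :: "real \<Rightarrow> real"
  assumes c: "continuous_on UNIV g" and z: "\<And>t. \<bar>t\<bar> > 1 \<Longrightarrow> g t = 0"
  shows "\<exists>M>0. \<forall>t. \<bar>g t\<bar> \<le> M"
proof -
  have "compact (g ` {-1..1})"
    by (rule compact_continuous_image) (use c continuous_on_subset in auto)
  then have "bounded (g ` {-1..1})" by (rule compact_imp_bounded)
  then obtain M where M: "\<forall>y\<in>g ` {-1..1}. \<bar>y\<bar> \<le> M" unfolding bounded_real by blast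
  have "\<forall>t. \<bar>g t\<bar> \<le> max M 1"
  proof
    fix t show "\<bar>g t\<bar> \<le> max M 1"
    proof (cases "\<bar>t\<bar> > 1")
      case True then show ?thesis using z by simp
    next
      case False then have "t \<in> {-1..1}" by auto
      then show ?thesis using M by force
    qed
  qed
  then show ?thesis by (intro exI[of _ "max M 1"]) auto
qed

lemma deriv_zero_outside:
  fixes f f' :: "real \<Rightarrow> real"
  assumes d: "\<And>x. DERIV f x :> f' x" and z: "\<And>t. \<bar>t\<bar> > 1 \<Longrightarrow> f t = 0" and t: "\<bar>t\<bar> > 1"
  shows "f' t = 0"
proof -
  define S where "S = (if t > 1 then {1<..} else {..<-1::real})"
  have S: "open S" "t \<in> S" "\<And>x. x \<in> S \<Longrightarrow> (\<lambda>_. 0) x = f x"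
    using t z by (auto simp: S_def split: if_splits)
  have "DERIV (\<lambda>_. 0::real) t :> f' t"
    by (rule has_field_derivative_transform_within_open[OF d S(1,2)]) (use S(3) in auto)
  moreover have "DERIV (\<lambda>_. 0::real) t :> 0" by simp
  ultimately show ?thesis by (rule DERIV_unique)
qed

locale front =
  fixes \<beta> m\<beta> :: real and J mbar J1 J2 :: "real \<Rightarrow> real" and C a :: real
  assumes J1: "\<And>x. (J has_real_derivative J1 x) (at x)"
    and J2: "\<And>x. (J1 has_real_derivative J2 x) (at x)"
    and J2c: "continuous_on UNIV J2"
    and J_supp: "\<And>r. \<bar>r\<bar> > 1 \<Longrightarrow> J r = 0"
    and mb_pos: "m\<beta> > 0"
    and mb_eq: "m\<beta> = tanh (\<beta> * m\<beta>)"
    and mbar_eq: "\<And>x. mbar x = tanh (\<beta> * (LINT y|lborel. J (x - y) * mbar y))"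
    and mbar_incr: "strict_mono mbar"
    and mbar_odd: "\<And>x. mbar (- x) = - mbar x"
    and mbar_top: "(mbar \<longlongrightarrow> m\<beta>) at_top"
    and mbar_diff: "\<And>x. mbar differentiable (at x)"
    and C_pos: "C > 0" and a_pos: "a > 0"
    and decay: "\<And>x. \<bar>deriv mbar x\<bar> \<le> C * exp (- a * \<bar>x\<bar>)"
begin

lemma mb_lt1: "m\<beta> < 1"
  using tanh_real_bounds[of "\<beta> * m\<beta>"] mb_eq by simp

lemma mbar_le_aux: "mbar x \<le> m\<beta>"
proof (rule tendsto_le[OF _ mbar_top tendsto_const])
  show "\<forall>\<^sub>F y in at_top. mbar x \<le> mbar y"
    unfolding eventually_at_top_linorder using mbar_incr
    by (auto intro!: exI[of _ x] simp: strict_mono_less_eq)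
qed simp

lemma mbar_lt: "mbar x < m\<beta>"
proof -
  have "mbar x < mbar (x + 1)" using mbar_incr by (simp add: strict_mono_less)
  then show ?thesis using mbar_le_aux[of "x + 1"] by simp
qed

lemma mbar_gt: "mbar x > - m\<beta>"
  using mbar_lt[of "- x"] mbar_odd[of x] by simp

lemma mbar_abs: "\<bar>mbar x\<bar> < m\<beta>" using mbar_lt[of x] mbar_gt[of x] by (simp add: abs_less_iff)

lemma mbar_abs1: "\<bar>mbar x\<bar> \<le> 1" using mbar_abs[of x] mb_lt1 by simp

definition q where "q = 1 - m\<beta>\<^sup>2"

lemma q_pos: "q > 0"
  using mb_pos mb_lt1 by (simp add: q_def power_less_one_iff abs_less_iff)

lemma one_minus_sq: "1 - (mbar x)\<^sup>2 \<ge> q"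
proof -
  have "(mbar x)\<^sup>2 \<le> m\<beta>\<^sup>2"
    using mbar_abs[of x] by (metis abs_le_square_iff abs_of_pos less_imp_le mb_pos)
  then show ?thesis by (simp add: q_def)
qed

lemma mbar_deriv: "DERIV mbar x :> deriv mbar x"
  using mbar_diff DERIV_deriv_iff_real_differentiable by blast

lemma mbar_cont: "continuous_on UNIV mbar"
  by (meson DERIV_isCont continuous_at_imp_continuous_on mbar_deriv)

lemma mbar_meas[measurable]: "mbar \<in> borel_measurable borel"
  by (rule borel_measurable_continuous_onI[OF mbar_cont])

lemma J_cont: "continuous_on UNIV J"
  by (meson DERIV_isCont continuous_at_imp_continuous_on J1)

lemma J1_cont: "continuous_on UNIV J1"
  by (meson DERIV_isCont continuous_at_imp_continuous_on J2)

lemma J_meas[measurable]: "J \<in> borel_measurable borel"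
  by (rule borel_measurable_continuous_onI[OF J_cont])
lemma J1_meas[measurable]: "J1 \<in> borel_measurable borel"
  by (rule borel_measurable_continuous_onI[OF J1_cont])

lemma J1_supp: "\<bar>r\<bar> > 1 \<Longrightarrow> J1 r = 0"
  by (rule deriv_zero_outside[OF J1 J_supp])
lemma J2_supp: "\<bar>r\<bar> > 1 \<Longrightarrow> J2 r = 0"
  by (rule deriv_zero_outside[OF J2 J1_supp])

definition M0 where "M0 = (SOME M. M > 0 \<and> (\<forall>t. \<bar>J t\<bar> \<le> M))"
definition M2 where "M2 = (SOME M. M > 0 \<and> (\<forall>t. \<bar>J2 t\<bar> \<le> M))"

lemma M0: "M0 > 0" "\<bar>J t\<bar> \<le> M0"
  using someI_ex[OF cont_bound_supp[OF J_cont J_supp]] unfolding M0_def by auto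
lemma M2: "M2 > 0" "\<bar>J2 t\<bar> \<le> M2"
  using someI_ex[OF cont_bound_supp[OF J2c J2_supp]] unfolding M2_def by auto

lemma J1_lip: "\<bar>J1 u - J1 v\<bar> \<le> M2 * \<bar>u - v\<bar>"
  using mvt_bound[OF J2, of v u M2] M2 by simp

lemma J1_bound: "\<bar>J1 t\<bar> \<le> 3 * M2"
proof (cases "\<bar>t\<bar> > 1")
  case True then show ?thesis using J1_supp M2 by simp
next
  case False
  have "\<bar>J1 t - J1 2\<bar> \<le> M2 * \<bar>t - 2\<bar>" by (rule J1_lip)
  moreover have "J1 2 = 0" by (rule J1_supp) simp
  moreover have "\<bar>t - 2\<bar> \<le> 3" using False by auto
  moreover have "M2 * \<bar>t - 2\<bar> \<le> M2 * 3" using M2(1) \<open>\<bar>t - 2\<bar> \<le> 3\<close> by (intro mult_left_mono) auto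
  ultimately have "\<bar>J1 t\<bar> \<le> M2 * 3" by simp
  then show ?thesis by simp
qed

lemma J_taylor: "\<bar>J (s + h) - J s - h * J1 s\<bar> \<le> M2 * h\<^sup>2"
proof -
  have d: "DERIV (\<lambda>t. J t - t * J1 s) z :> J1 z - J1 s" for z
    by (auto intro!: derivative_eq_intros J1)
  have b: "\<bar>J1 z - J1 s\<bar> \<le> M2 * \<bar>h\<bar>" if "min s (s + h) \<le> z" "z \<le> max s (s + h)" for z
  proof -
    have "\<bar>J1 z - J1 s\<bar> \<le> M2 * \<bar>z - s\<bar>" by (rule J1_lip)
    also have "\<dots> \<le> M2 * \<bar>h\<bar>" using that M2 by (intro mult_left_mono) auto
    finally show ?thesis .
  qed
  have A: "\<bar>(J (s + h) - (s + h) * J1 s) - (J s - s * J1 s)\<bar> \<le> M2 * \<bar>h\<bar> * \<bar>(s + h) - s\<bar>"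
    by (rule mvt_bound[OF d b])
  have e1: "(J (s + h) - (s + h) * J1 s) - (J s - s * J1 s) = J (s + h) - J s - h * J1 s"
    by (simp add: algebra_simps)
  have e2: "M2 * \<bar>h\<bar> * \<bar>(s + h) - s\<bar> = M2 * h\<^sup>2"
  proof -
    have "\<bar>h\<bar> * \<bar>h\<bar> = h\<^sup>2" by (simp add: power2_eq_square)
    then show ?thesis by (simp add: mult.assoc)
  qed
  show ?thesis using A unfolding e1 e2 .
qed

end


context front begin

definition Phi where "Phi x = (LINT y|lborel. J (x - y) * mbar y)"
definition Phi1 where "Phi1 x = (LINT y|lborel. J1 (x - y) * mbar y)"

lemma Phi_int: "integrable lborel (\<lambda>y. J (x - y) * mbar y)"
proof (rule int_bounded_support(1)[where K = M0 and c = x and R = 1])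
  show "(\<lambda>y. J (x - y) * mbar y) \<in> borel_measurable lborel" by measurable
  fix y show "\<bar>J (x - y) * mbar y\<bar> \<le> M0 * indicator {x - 1..x + 1} y"
  proof (cases "\<bar>x - y\<bar> > 1")
    case True then show ?thesis using J_supp[OF True] M0 by (simp add: indicator_def)
  next
    case False
    then have "y \<in> {x - 1..x + 1}" by auto
    moreover have "\<bar>J (x - y) * mbar y\<bar> \<le> M0 * 1"
      unfolding abs_mult using M0 mbar_abs1 by (intro mult_mono) auto
    ultimately show ?thesis by simp
  qed
qed simp

lemma Phi1_int: "integrable lborel (\<lambda>y. J1 (x - y) * mbar y)"
proof (rule int_bounded_support(1)[where K = "3 * M2" and c = x and R = 1])
  show "(\<lambda>y. J1 (x - y) * mbar y) \<in> borel_measurable lborel" by measurable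
  fix y show "\<bar>J1 (x - y) * mbar y\<bar> \<le> 3 * M2 * indicator {x - 1..x + 1} y"
  proof (cases "\<bar>x - y\<bar> > 1")
    case True then show ?thesis using J1_supp[OF True] M2 by (simp add: indicator_def)
  next
    case False
    then have "y \<in> {x - 1..x + 1}" by auto
    moreover have "\<bar>J1 (x - y) * mbar y\<bar> \<le> 3 * M2 * 1"
      unfolding abs_mult using J1_bound mbar_abs1 M2 by (intro mult_mono) auto
    ultimately show ?thesis by simp
  qed
qed simp

lemma Phi_deriv: "DERIV Phi x :> Phi1 x"
proof (rule deriv_from_quad[where C = "M2 * 4"])
  fix h :: real assume h: "\<bar>h\<bar> \<le> 1"
  have "Phi (x + h) - Phi x - h * Phi1 x =
      (LINT y|lborel. (J (x + h - y) - J (x - y) - h * J1 (x - y)) * mbar y)"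
  proof -
    have e: "(\<lambda>y. (J (x + h - y) - J (x - y) - h * J1 (x - y)) * mbar y) =
      (\<lambda>y. J (x + h - y) * mbar y - J (x - y) * mbar y - h * (J1 (x - y) * mbar y))"
      by (rule ext) (simp add: algebra_simps)
    have i3: "integrable lborel (\<lambda>y. h * (J1 (x - y) * mbar y))" using Phi1_int[of x] by simp
    have i12: "integrable lborel (\<lambda>y. J (x + h - y) * mbar y - J (x - y) * mbar y)"
      using Phi_int[of "x + h"] Phi_int[of x] by simp
    show ?thesis unfolding e Phi_def Phi1_def
      by (simp add: Bochner_Integration.integral_diff[OF i12 i3]
          Bochner_Integration.integral_diff[OF Phi_int[of "x + h"] Phi_int[of x]])
  qed
  also have "\<bar>\<dots>\<bar> \<le> M2 * h\<^sup>2 * (2 * 2)"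
  proof (rule int_bounded_support(2)[where c = x])
    show "(\<lambda>y. (J (x + h - y) - J (x - y) - h * J1 (x - y)) * mbar y) \<in> borel_measurable lborel"
      by measurable
    fix y show "\<bar>(J (x + h - y) - J (x - y) - h * J1 (x - y)) * mbar y\<bar> \<le> M2 * h\<^sup>2 * indicator {x - 2..x + 2} y"
    proof (cases "\<bar>x - y\<bar> > 2")
      case True
      then have "\<bar>x + h - y\<bar> > 1" "\<bar>x - y\<bar> > 1" using h by auto
      then show ?thesis using J_supp J1_supp True M2(1) by (simp add: indicator_def)
    next
      case False
      then have "y \<in> {x - 2..x + 2}" by auto
      moreover have "\<bar>(J (x + h - y) - J (x - y) - h * J1 (x - y)) * mbar y\<bar> \<le> M2 * h\<^sup>2 * 1"
        unfolding abs_mult using J_taylor[of "x - y" h] mbar_abs1 M2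
        by (intro mult_mono) (auto simp: algebra_simps)
      ultimately show ?thesis by simp
    qed
  qed simp
  finally show "\<bar>Phi (x + h) - Phi x - h * Phi1 x\<bar> \<le> M2 * 4 * h\<^sup>2" by simp
qed

lemma mbar_Phi: "mbar = (\<lambda>x. tanh (\<beta> * Phi x))"
  unfolding Phi_def by (rule ext) (rule mbar_eq)

lemma mbar_deriv_eq: "deriv mbar x = (1 - (mbar x)\<^sup>2) * (\<beta> * Phi1 x)"
proof -
  have d0: "DERIV (\<lambda>x. tanh (\<beta> * Phi x)) x :> (1 - (tanh (\<beta> * Phi x))\<^sup>2) * (\<beta> * Phi1 x)"
    by (auto intro!: derivative_eq_intros Phi_deriv)
  have eq: "tanh (\<beta> * Phi x) = mbar x" using fun_cong[OF mbar_Phi, of x] by simp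
  have feq: "(\<lambda>x. tanh (\<beta> * Phi x)) = mbar" by (rule mbar_Phi[symmetric])
  have "DERIV mbar x :> (1 - (mbar x)\<^sup>2) * (\<beta> * Phi1 x)"
    using d0 unfolding eq feq .
  then show ?thesis by (rule DERIV_imp_deriv)
qed

definition w where "w x = deriv mbar x / (1 - (mbar x)\<^sup>2)"

lemma w_Phi1: "w x = \<beta> * Phi1 x"
proof -
  have "1 - (mbar x)\<^sup>2 > 0" using one_minus_sq[of x] q_pos by linarith
  then show ?thesis unfolding w_def mbar_deriv_eq by simp
qed

end

context front begin

lemma deriv_nonneg: "deriv mbar x \<ge> 0"
proof (rule ccontr)
  assume "\<not> deriv mbar x \<ge> 0"
  then have "deriv mbar x < 0" by simp
  from DERIV_neg_dec_right[OF mbar_deriv this] obtain d where d: "d > 0"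
    "\<forall>h>0. h < d \<longrightarrow> mbar x > mbar (x + h)" by blast
  have "mbar x > mbar (x + d / 2)" using d by auto
  moreover have "mbar x < mbar (x + d / 2)" using mbar_incr d(1) by (simp add: strict_mono_less)
  ultimately show False by simp
qed

lemma denom_pos: "1 - (mbar x)\<^sup>2 > 0" using one_minus_sq[of x] q_pos by linarith

lemma w_nonneg: "w x \<ge> 0"
  unfolding w_def using deriv_nonneg[of x] denom_pos[of x] by simp

definition Cw where "Cw = C / q"

lemma Cw_pos: "Cw > 0" using C_pos q_pos by (simp add: Cw_def)

lemma w_decay: "w x \<le> Cw * exp (- a * \<bar>x\<bar>)"
proof -
  have "w x = deriv mbar x / (1 - (mbar x)\<^sup>2)" by (simp add: w_def)
  also have "\<dots> \<le> deriv mbar x / q"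
    using deriv_nonneg[of x] one_minus_sq[of x] q_pos by (intro divide_left_mono) auto
  also have "\<dots> \<le> C * exp (- a * \<bar>x\<bar>) / q"
    using decay[of x] q_pos by (intro divide_right_mono) auto
  finally show ?thesis by (simp add: Cw_def)
qed

lemma w_le: "w x \<le> Cw"
proof -
  have "exp (- a * \<bar>x\<bar>) \<le> 1" using a_pos by simp
  then show ?thesis using w_decay[of x] Cw_pos by (smt (verit) mult_left_le)
qed

lemma deriv_even: "deriv mbar (- x) = deriv mbar x"
proof -
  have "DERIV (\<lambda>x. mbar (- x)) x :> deriv mbar (- x) * (- 1)"
    by (rule DERIV_chain2[OF mbar_deriv]) (auto intro!: derivative_eq_intros)
  moreover have "(\<lambda>x. mbar (- x)) = (\<lambda>x. - mbar x)" using mbar_odd by auto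
  ultimately have "DERIV (\<lambda>x. - mbar x) x :> - deriv mbar (- x)" by simp
  moreover have "DERIV (\<lambda>x. - mbar x) x :> - deriv mbar x"
    by (auto intro!: derivative_eq_intros mbar_deriv)
  ultimately show ?thesis using DERIV_unique by fastforce
qed

lemma w_even: "w (- x) = w x"
  unfolding w_def deriv_even mbar_odd by simp

lemma mbar_diff_bound:
  assumes "\<bar>y - u\<bar> \<le> 2"
  shows "\<bar>mbar y - mbar u\<bar> \<le> C * exp (2 * a) * exp (- a * \<bar>u\<bar>) * 2"
proof -
  have "\<bar>mbar y - mbar u\<bar> \<le> C * exp (2 * a) * exp (- a * \<bar>u\<bar>) * \<bar>y - u\<bar>"
  proof (rule mvt_bound[OF mbar_deriv])
    fix z assume z: "min u y \<le> z" "z \<le> max u y"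
    have "\<bar>u\<bar> \<le> \<bar>z\<bar> + 2" using z assms by auto
    then have "a * \<bar>u\<bar> \<le> a * (\<bar>z\<bar> + 2)" using a_pos by (intro mult_left_mono) auto
    then have "- a * \<bar>z\<bar> \<le> 2 * a + - a * \<bar>u\<bar>" by (simp add: algebra_simps)
    then have "exp (- a * \<bar>z\<bar>) \<le> exp (2 * a) * exp (- a * \<bar>u\<bar>)"
      by (simp flip: exp_add)
    then show "\<bar>deriv mbar z\<bar> \<le> C * exp (2 * a) * exp (- a * \<bar>u\<bar>)"
      using decay[of z] C_pos by (smt (verit) mult_left_mono mult.assoc)
  qed
  also have "\<dots> \<le> C * exp (2 * a) * exp (- a * \<bar>u\<bar>) * 2"
    using assms C_pos by (intro mult_left_mono) auto
  finally show ?thesis .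
qed

lemma J1_int0: "(LINT z|lborel. J1 z) = 0"
proof -
  have "(LINT z|lborel. indicator {-2..2} z *\<^sub>R J1 z) = J 2 - J (-2)"
  proof (rule integral_FTC_atLeastAtMost)
    fix x :: real
    show "(J has_vector_derivative J1 x) (at x within {-2..2})"
      using J1[of x] by (simp add: has_real_derivative_iff_has_vector_derivative has_vector_derivative_at_within)
  next
    show "continuous_on {-2..2} J1" using J1_cont continuous_on_subset by blast
  qed simp
  moreover have "J 2 = 0" "J (-2) = 0" by (auto intro: J_supp)
  moreover have "(\<lambda>z. indicator {-2..2} z *\<^sub>R J1 z) = J1"
  proof
    fix z show "indicator {-2..2} z *\<^sub>R J1 z = J1 z"
    proof (cases "\<bar>z\<bar> > 1")
      case True then show ?thesis using J1_supp by simp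
    next
      case False then have "z \<in> {-2..2}" by auto
      then show ?thesis by simp
    qed
  qed
  ultimately show ?thesis by simp
qed

lemma J1_shift_int: "integrable lborel (\<lambda>y. J1 (u - y))"
proof (rule int_bounded_support(1)[where K = "3 * M2" and c = u and R = 1])
  fix y show "\<bar>J1 (u - y)\<bar> \<le> 3 * M2 * indicator {u - 1..u + 1} y"
    using J1_supp[of "u - y"] J1_bound[of "u - y"] M2 by (auto simp: indicator_def)
qed auto

lemma J1_shift_int0: "(LINT y|lborel. J1 (u - y)) = 0"
  using lborel_integral_real_affine[of "-1" J1 u] J1_int0 by simp

lemma Phi1_alt: "Phi1 u = (LINT y|lborel. J1 (u - y) * (mbar y - c))"
  and Phi1_alt_int: "integrable lborel (\<lambda>y. J1 (u - y) * (mbar y - c))"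
proof -
  have e: "(\<lambda>y. J1 (u - y) * (mbar y - c)) = (\<lambda>y. J1 (u - y) * mbar y - c * J1 (u - y))"
    by (rule ext) (simp add: algebra_simps)
  have i2: "integrable lborel (\<lambda>y. c * J1 (u - y))" using J1_shift_int by simp
  show "integrable lborel (\<lambda>y. J1 (u - y) * (mbar y - c))" unfolding e using Phi1_int i2 by simp
  show "Phi1 u = (LINT y|lborel. J1 (u - y) * (mbar y - c))" unfolding e Phi1_def
    by (simp add: Bochner_Integration.integral_diff[OF Phi1_int i2] J1_shift_int0)
qed

end

context front begin

lemma Phi1_lip:
  assumes uv: "\<bar>u - v\<bar> \<le> 1"
  shows "\<bar>Phi1 u - Phi1 v\<bar> \<le> 8 * M2 * C * exp (2 * a) * exp (- a * \<bar>u\<bar>) * \<bar>u - v\<bar>"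
proof -
  define K where "K = M2 * \<bar>u - v\<bar> * (C * exp (2 * a) * exp (- a * \<bar>u\<bar>) * 2)"
  have "Phi1 u - Phi1 v = (LINT y|lborel. (J1 (u - y) - J1 (v - y)) * (mbar y - mbar u))"
  proof -
    have e: "(\<lambda>y. (J1 (u - y) - J1 (v - y)) * (mbar y - mbar u)) =
      (\<lambda>y. J1 (u - y) * (mbar y - mbar u) - J1 (v - y) * (mbar y - mbar u))"
      by (rule ext) (simp add: algebra_simps)
    show ?thesis unfolding e
      by (simp add: Bochner_Integration.integral_diff[OF Phi1_alt_int Phi1_alt_int] Phi1_alt[of u "mbar u"] Phi1_alt[of v "mbar u"])
  qed
  also have "\<bar>\<dots>\<bar> \<le> K * (2 * 2)"
  proof (rule int_bounded_support(2)[where c = u])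
    show "(\<lambda>y. (J1 (u - y) - J1 (v - y)) * (mbar y - mbar u)) \<in> borel_measurable lborel" by measurable
    fix y show "\<bar>(J1 (u - y) - J1 (v - y)) * (mbar y - mbar u)\<bar> \<le> K * indicator {u - 2..u + 2} y"
    proof (cases "\<bar>u - y\<bar> > 2")
      case True
      then have "\<bar>u - y\<bar> > 1" "\<bar>v - y\<bar> > 1" using uv by auto
      moreover have "K \<ge> 0" unfolding K_def using M2 C_pos by simp
      ultimately show ?thesis using J1_supp by (simp add: indicator_def)
    next
      case False
      then have y: "y \<in> {u - 2..u + 2}" "\<bar>y - u\<bar> \<le> 2" by auto
      have "\<bar>J1 (u - y) - J1 (v - y)\<bar> \<le> M2 * \<bar>u - v\<bar>"
        using J1_lip[of "u - y" "v - y"] by simp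
      moreover have "\<bar>mbar y - mbar u\<bar> \<le> C * exp (2 * a) * exp (- a * \<bar>u\<bar>) * 2"
        by (rule mbar_diff_bound[OF y(2)])
      ultimately have "\<bar>(J1 (u - y) - J1 (v - y)) * (mbar y - mbar u)\<bar> \<le> K"
        unfolding K_def abs_mult by (intro mult_mono) auto
      then show ?thesis using y by simp
    qed
  qed simp
  finally show ?thesis unfolding K_def by (simp add: algebra_simps)
qed

definition Kw where "Kw = \<bar>\<beta>\<bar> * (8 * M2 * C * exp (2 * a)) + 1"

lemma Kw_pos: "Kw > 0"
  unfolding Kw_def using M2 C_pos by (simp add: add_nonneg_pos)

lemma w_lip:
  assumes uv: "\<bar>u - v\<bar> \<le> 1"
  shows "\<bar>w u - w v\<bar> \<le> Kw * exp (- a * \<bar>u\<bar>) * \<bar>u - v\<bar>"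
proof -
  have "\<bar>w u - w v\<bar> = \<bar>\<beta>\<bar> * \<bar>Phi1 u - Phi1 v\<bar>"
    unfolding w_Phi1 by (simp flip: abs_mult add: algebra_simps)
  also have "\<dots> \<le> \<bar>\<beta>\<bar> * (8 * M2 * C * exp (2 * a) * exp (- a * \<bar>u\<bar>) * \<bar>u - v\<bar>)"
    by (intro mult_left_mono Phi1_lip uv) simp
  also have "\<dots> = (\<bar>\<beta>\<bar> * (8 * M2 * C * exp (2 * a))) * (exp (- a * \<bar>u\<bar>) * \<bar>u - v\<bar>)"
    by (simp add: algebra_simps)
  also have "\<dots> \<le> Kw * (exp (- a * \<bar>u\<bar>) * \<bar>u - v\<bar>)"
    unfolding Kw_def by (intro mult_right_mono) auto
  finally show ?thesis by (simp add: algebra_simps)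
qed

lemma w_lip1:
  assumes uv: "\<bar>u - v\<bar> \<le> 1"
  shows "\<bar>w u - w v\<bar> \<le> Kw * \<bar>u - v\<bar>"
proof -
  have "exp (- a * \<bar>u\<bar>) \<le> 1" using a_pos by simp
  then have "Kw * exp (- a * \<bar>u\<bar>) * \<bar>u - v\<bar> \<le> Kw * 1 * \<bar>u - v\<bar>"
    using Kw_pos by (intro mult_right_mono mult_left_mono) auto
  then show ?thesis using w_lip[OF uv] by simp
qed

lemma w_isCont: "isCont w u"
  unfolding continuous_at LIM_eq
proof (intro allI impI)
  fix r :: real assume r: "r > 0"
  show "\<exists>s>0. \<forall>x. x \<noteq> u \<and> norm (x - u) < s \<longrightarrow> norm (w x - w u) < r"
  proof (intro exI[of _ "min 1 (r / Kw)"] conjI allI impI)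
    show "0 < min 1 (r / Kw)" using r Kw_pos by simp
    fix x assume x: "x \<noteq> u \<and> norm (x - u) < min 1 (r / Kw)"
    then have "\<bar>w x - w u\<bar> \<le> Kw * \<bar>x - u\<bar>" by (intro w_lip1) auto
    also have "\<dots> < Kw * (r / Kw)" using x Kw_pos by (intro mult_strict_left_mono) auto
    also have "\<dots> = r" using Kw_pos by simp
    finally show "norm (w x - w u) < r" by simp
  qed
qed

lemma w_cont: "continuous_on UNIV w"
  using w_isCont continuous_at_imp_continuous_on by blast

lemma w_meas[measurable]: "w \<in> borel_measurable borel"
  by (rule borel_measurable_continuous_onI[OF w_cont])

end

context front begin

lemma w_abs_decay: "\<bar>w x\<bar> \<le> Cw * exp (- a * \<bar>x\<bar>)"
  using w_decay[of x] w_nonneg[of x] by simp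

lemma mw_int:
  assumes mm: "m \<in> borel_measurable lborel" and mb: "\<And>x. \<bar>m x\<bar> \<le> 1"
  shows "integrable lborel (\<lambda>x. m x * w (x - \<xi>))"
proof (rule Bochner_Integration.integrable_bound)
  show "integrable lborel (\<lambda>x. Cw * exp (- a * \<bar>x - \<xi>\<bar>))"
    using exp_abs_integrable[OF a_pos] by simp
  show "(\<lambda>x. m x * w (x - \<xi>)) \<in> borel_measurable lborel" using mm by measurable
  show "AE x in lborel. norm (m x * w (x - \<xi>)) \<le> norm (Cw * exp (- a * \<bar>x - \<xi>\<bar>))"
  proof (rule AE_I2)
    fix x
    have "\<bar>m x * w (x - \<xi>)\<bar> \<le> 1 * (Cw * exp (- a * \<bar>x - \<xi>\<bar>))"
      unfolding abs_mult using mb[of x] w_abs_decay[of "x - \<xi>"] by (intro mult_mono) auto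
    then show "norm (m x * w (x - \<xi>)) \<le> norm (Cw * exp (- a * \<bar>x - \<xi>\<bar>))" by simp
  qed
qed

lemma w_shift_int: "integrable lborel (\<lambda>x. w (x - \<xi>))"
  using mw_int[of "\<lambda>_. 1" \<xi>] by simp

lemma w_int: "integrable lborel w"
  using w_shift_int[of 0] by simp

lemma w2_int: "integrable lborel (\<lambda>x. (w (x - \<xi>))\<^sup>2)"
proof (rule Bochner_Integration.integrable_bound)
  show "integrable lborel (\<lambda>x. Cw * w (x - \<xi>))" using w_shift_int by simp
  show "(\<lambda>x. (w (x - \<xi>))\<^sup>2) \<in> borel_measurable lborel" by measurable
  show "AE x in lborel. norm ((w (x - \<xi>))\<^sup>2) \<le> norm (Cw * w (x - \<xi>))"
  proof (rule AE_I2)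
    fix x
    have "(w (x - \<xi>))\<^sup>2 \<le> Cw * w (x - \<xi>)"
      unfolding power2_eq_square using w_le w_nonneg by (intro mult_right_mono) auto
    then show "norm ((w (x - \<xi>))\<^sup>2) \<le> norm (Cw * w (x - \<xi>))"
      using w_nonneg Cw_pos by simp
  qed
qed

definition W1 where "W1 = (LINT x|lborel. w x)"
definition W2 where "W2 = (LINT x|lborel. (w x)\<^sup>2)"

lemma W1_nonneg: "W1 \<ge> 0" unfolding W1_def using w_nonneg by simp

lemma W2_shift: "(LINT x|lborel. (w (x - \<xi>))\<^sup>2) = W2"
  using lborel_integral_real_affine[of 1 "\<lambda>x. (w (x - \<xi>))\<^sup>2" \<xi>] unfolding W2_def by simp

lemma W2_pos: "W2 > 0"
proof -
  have "\<exists>z>0. z < 1 \<and> mbar 1 - mbar 0 = (1 - 0) * deriv mbar z"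
    by (rule MVT2) (auto intro: mbar_deriv)
  then obtain \<theta> where th: "0 < \<theta>" "\<theta> < 1" "mbar 1 - mbar 0 = (1 - 0) * deriv mbar \<theta>"
    by blast
  have "mbar 0 < mbar 1" using mbar_incr by (simp add: strict_mono_less)
  then have "deriv mbar \<theta> > 0" using th by simp
  then have wt: "w \<theta> > 0" unfolding w_def using denom_pos[of \<theta>] by simp
  define \<rho> where "\<rho> = min 1 (w \<theta> / (2 * Kw))"
  have rho: "\<rho> > 0" "\<rho> \<le> 1" "\<rho> \<le> w \<theta> / (2 * Kw)" using wt Kw_pos by (auto simp: \<rho>_def)
  have pw: "(w \<theta> / 2)\<^sup>2 * indicator {\<theta> - \<rho>..\<theta> + \<rho>} x \<le> (w x)\<^sup>2" for x
  proof (cases "x \<in> {\<theta> - \<rho>..\<theta> + \<rho>}")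
    case True
    then have x: "\<bar>x - \<theta>\<bar> \<le> \<rho>" by auto
    then have "\<bar>w x - w \<theta>\<bar> \<le> Kw * \<bar>x - \<theta>\<bar>" using rho by (intro w_lip1) auto
    also have "\<dots> \<le> Kw * \<rho>" using x Kw_pos by (intro mult_left_mono) auto
    also have "\<dots> \<le> Kw * (w \<theta> / (2 * Kw))" using rho Kw_pos by (intro mult_left_mono) auto
    also have "\<dots> = w \<theta> / 2" using Kw_pos by simp
    finally have "\<bar>w x - w \<theta>\<bar> \<le> w \<theta> / 2" .
    moreover have "- (w x - w \<theta>) \<le> \<bar>w x - w \<theta>\<bar>" by (rule abs_ge_minus_self)
    ultimately have "w x \<ge> w \<theta> / 2" by linarith
    then have "(w \<theta> / 2)\<^sup>2 \<le> (w x)\<^sup>2" using wt by (intro power_mono) auto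
    then show ?thesis using True by simp
  next
    case False then show ?thesis by simp
  qed
  have "(LINT x|lborel. (w \<theta> / 2)\<^sup>2 * indicator {\<theta> - \<rho>..\<theta> + \<rho>} x) \<le> W2"
    unfolding W2_def using w2_int[of 0]
    by (intro integral_mono pw) (auto intro!: integrable_mult_right integrable_real_indicator simp: emeasure_lborel_Icc_eq)
  moreover have "(LINT x|lborel. (w \<theta> / 2)\<^sup>2 * indicator {\<theta> - \<rho>..\<theta> + \<rho>} x) = (w \<theta> / 2)\<^sup>2 * (2 * \<rho>)"
    using rho by simp
  moreover have "(w \<theta> / 2)\<^sup>2 * (2 * \<rho>) > 0" using wt rho by simp
  ultimately show ?thesis by linarith
qed

definition F where "F m \<xi> = (LINT x|lborel. m x * w (x - \<xi>))"
definition G where "G s = (LINT y|lborel. mbar (y + s) * w y)"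

lemma G_int: "integrable lborel (\<lambda>y. mbar (y + s) * w y)"
  using mw_int[of "\<lambda>y. mbar (y + s)" 0] mbar_abs1 by simp

lemma F_mbar: "F (\<lambda>x. mbar (x - \<xi>0)) \<xi> = G (\<xi> - \<xi>0)"
proof -
  have "F (\<lambda>x. mbar (x - \<xi>0)) \<xi> = (LINT x|lborel. mbar (\<xi> + 1 * x - \<xi>0) * w (\<xi> + 1 * x - \<xi>))"
    unfolding F_def using lborel_integral_real_affine[of 1 "\<lambda>x. mbar (x - \<xi>0) * w (x - \<xi>)" \<xi>] by simp
  also have "\<dots> = G (\<xi> - \<xi>0)" unfolding G_def by (simp add: algebra_simps)
  finally show ?thesis .
qed

lemma G0: "G 0 = 0"
proof -
  have "G 0 = (LINT y|lborel. mbar (0 + (-1) * y) * w (0 + (-1) * y))"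
    unfolding G_def using lborel_integral_real_affine[of "-1" "\<lambda>y. mbar y * w y" 0] by simp
  also have "\<dots> = - G 0" unfolding G_def by (simp add: mbar_odd w_even)
  finally show ?thesis by simp
qed

lemma G_mono: "s \<le> s' \<Longrightarrow> G s \<le> G s'"
  unfolding G_def
  by (intro integral_mono G_int mult_right_mono w_nonneg) (auto simp: strict_mono_less_eq[OF mbar_incr])

definition r where "r = min (1/2) (W2 / (2 * Kw * (W1 + 1)))"
definition \<kappa> where "\<kappa> = q * W2 / 2"

lemma r_pos: "r > 0"
  using W2_pos Kw_pos W1_nonneg by (auto simp: r_def)
lemma r_le: "r \<le> 1/2"
  unfolding r_def by (rule min.cobounded1)

lemma kappa_pos: "\<kappa> > 0" using q_pos W2_pos by (simp add: \<kappa>_def)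

lemma G_lower:
  assumes s: "- r \<le> s" "s < s'" "s' \<le> r"
  shows "G s' - G s \<ge> \<kappa> * (s' - s)"
proof -
  have pw: "q * (s' - s) * ((w y)\<^sup>2 - Kw * r * w y) \<le> (mbar (y + s') - mbar (y + s)) * w y" for y
  proof -
    obtain z where z: "y + s < z" "z < y + s'" "mbar (y + s') - mbar (y + s) = (y + s' - (y + s)) * deriv mbar z"
      using MVT2[of "y + s" "y + s'" mbar "deriv mbar"] mbar_deriv s by auto
    have "deriv mbar z = w z * (1 - (mbar z)\<^sup>2)" unfolding w_def using denom_pos[of z] by simp
    also have "\<dots> \<ge> w z * q" using one_minus_sq[of z] w_nonneg[of z] by (intro mult_left_mono) auto
    finally have dz: "deriv mbar z \<ge> q * w z" by (simp add: mult.commute)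
    have zy: "\<bar>z - y\<bar> \<le> r" using z s by auto
    have "\<bar>w z - w y\<bar> \<le> Kw * \<bar>z - y\<bar>" using zy r_le by (intro w_lip1) auto
    also have "\<dots> \<le> Kw * r" using zy Kw_pos by (intro mult_left_mono) auto
    finally have "w z \<ge> w y - Kw * r" by simp
    then have "q * w z \<ge> q * (w y - Kw * r)" using q_pos by (intro mult_left_mono) auto
    with dz have "deriv mbar z \<ge> q * (w y - Kw * r)" by simp
    then have "mbar (y + s') - mbar (y + s) \<ge> (s' - s) * (q * (w y - Kw * r))"
      using z(3) s by (simp add: mult_left_mono)
    then have "(mbar (y + s') - mbar (y + s)) * w y \<ge> (s' - s) * (q * (w y - Kw * r)) * w y"
      using w_nonneg[of y] by (intro mult_right_mono) auto
    then show ?thesis by (simp add: algebra_simps power2_eq_square)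
  qed
  have i1: "integrable lborel (\<lambda>y. q * (s' - s) * ((w y)\<^sup>2 - Kw * r * w y))"
    using w2_int[of 0] w_int by simp
  have i2: "integrable lborel (\<lambda>y. (mbar (y + s') - mbar (y + s)) * w y)"
    using G_int[of s'] G_int[of s] by (simp add: left_diff_distrib)
  have "(LINT y|lborel. q * (s' - s) * ((w y)\<^sup>2 - Kw * r * w y)) \<le> (LINT y|lborel. (mbar (y + s') - mbar (y + s)) * w y)"
    by (rule integral_mono[OF i1 i2 pw])
  moreover have "(LINT y|lborel. q * (s' - s) * ((w y)\<^sup>2 - Kw * r * w y)) = q * (s' - s) * (W2 - Kw * r * W1)"
    unfolding W1_def W2_def using w2_int[of 0] w_int by simp
  moreover have "(LINT y|lborel. (mbar (y + s') - mbar (y + s)) * w y) = G s' - G s"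
    unfolding G_def using G_int[of s'] G_int[of s] by (simp add: left_diff_distrib)
  moreover have "Kw * r * W1 \<le> W2 / 2"
  proof -
    have d: "2 * Kw * (W1 + 1) > 0" using Kw_pos W1_nonneg by simp
    have "r \<le> W2 / (2 * Kw * (W1 + 1))" by (simp add: r_def)
    then have rr: "r * (2 * Kw * (W1 + 1)) \<le> W2" using d by (simp add: pos_le_divide_eq)
    have "Kw * r * W1 \<le> Kw * r * (W1 + 1)"
      using Kw_pos r_pos by (intro mult_left_mono) auto
    also have "\<dots> = r * (2 * Kw * (W1 + 1)) / 2" by (simp add: algebra_simps)
    also have "\<dots> \<le> W2 / 2" using rr by simp
    finally show ?thesis .
  qed
  moreover have "q * (s' - s) * (W2 / 2) \<le> q * (s' - s) * (W2 - Kw * r * W1)"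
    using calculation(4) q_pos s by (intro mult_left_mono) auto
  ultimately have "G s' - G s \<ge> q * (s' - s) * (W2 / 2)"
    by linarith
  moreover have "q * (s' - s) * (W2 / 2) = \<kappa> * (s' - s)" by (simp add: \<kappa>_def)
  ultimately show ?thesis by (metis)
qed

lemma G_pos: "r \<le> s \<Longrightarrow> G s \<ge> \<kappa> * r"
  using G_lower[of 0 r] G0 G_mono[of r s] r_pos by (simp add: algebra_simps)

lemma G_neg: "s \<le> - r \<Longrightarrow> G s \<le> - (\<kappa> * r)"
  using G_lower[of "- r" 0] G0 G_mono[of s "- r"] r_pos by (simp add: algebra_simps)

end

context front begin

definition E1 where "E1 = (LINT x|lborel. exp (- a * \<bar>x\<bar>))"
definition E2 where "E2 = (LINT x|lborel. exp (- (2 * a) * \<bar>x\<bar>))"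

lemma E2_nonneg: "E2 \<ge> 0" unfolding E2_def by simp
lemma E1_nonneg: "E1 \<ge> 0" unfolding E1_def by simp

lemma is_center_iff:
  assumes "Linf_pm1 m"
  shows "is_center mbar m \<xi> \<longleftrightarrow> F m \<xi> = 0"
proof -
  have mm: "m \<in> borel_measurable lborel" and mb: "\<And>x. \<bar>m x\<bar> \<le> 1"
    using assms by (auto simp: Linf_pm1_def)
  have e: "(\<lambda>x. m x * deriv mbar (x - \<xi>) / (1 - (mbar (x - \<xi>))\<^sup>2)) = (\<lambda>x. m x * w (x - \<xi>))"
    by (rule ext) (simp add: w_def)
  show ?thesis unfolding is_center_def e F_def using mw_int[OF mm mb] by simp
qed

lemma F_lip:
  assumes mm: "m \<in> borel_measurable lborel" and mb: "\<And>x. \<bar>m x\<bar> \<le> 1"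
    and d: "\<bar>\<xi>' - \<xi>\<bar> \<le> 1"
  shows "\<bar>F m \<xi>' - F m \<xi>\<bar> \<le> Kw * E1 * \<bar>\<xi>' - \<xi>\<bar>"
proof -
  have eq: "F m \<xi>' - F m \<xi> = (LINT x|lborel. m x * w (x - \<xi>') - m x * w (x - \<xi>))"
    unfolding F_def using mw_int[OF mm mb, of \<xi>'] mw_int[OF mm mb, of \<xi>] by simp
  have pw: "\<bar>m x * w (x - \<xi>') - m x * w (x - \<xi>)\<bar> \<le> Kw * \<bar>\<xi>' - \<xi>\<bar> * exp (- a * \<bar>x - \<xi>\<bar>)" for x
  proof -
    have A0: "\<bar>w (x - \<xi>) - w (x - \<xi>')\<bar> \<le> Kw * exp (- a * \<bar>x - \<xi>\<bar>) * \<bar>(x - \<xi>) - (x - \<xi>')\<bar>"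
      using d by (intro w_lip) auto
    have e1: "\<bar>(x - \<xi>) - (x - \<xi>')\<bar> = \<bar>\<xi>' - \<xi>\<bar>" by simp
    have A: "\<bar>w (x - \<xi>') - w (x - \<xi>)\<bar> \<le> Kw * exp (- a * \<bar>x - \<xi>\<bar>) * \<bar>\<xi>' - \<xi>\<bar>"
      using A0 abs_minus_commute[of "w (x - \<xi>)" "w (x - \<xi>')"] unfolding e1 by linarith
    have "m x * w (x - \<xi>') - m x * w (x - \<xi>) = m x * (w (x - \<xi>') - w (x - \<xi>))"
      by (simp add: right_diff_distrib)
    then have B: "\<bar>m x * w (x - \<xi>') - m x * w (x - \<xi>)\<bar> = \<bar>m x\<bar> * \<bar>w (x - \<xi>') - w (x - \<xi>)\<bar>"
      by (simp add: abs_mult)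
    have C: "\<bar>m x\<bar> * \<bar>w (x - \<xi>') - w (x - \<xi>)\<bar> \<le> 1 * \<bar>w (x - \<xi>') - w (x - \<xi>)\<bar>"
      using mb[of x] by (intro mult_right_mono) auto
    have D: "Kw * exp (- a * \<bar>x - \<xi>\<bar>) * \<bar>\<xi>' - \<xi>\<bar> = Kw * \<bar>\<xi>' - \<xi>\<bar> * exp (- a * \<bar>x - \<xi>\<bar>)"
      by (simp add: mult_ac)
    show ?thesis using A B C D by linarith
  qed
  have i1: "integrable lborel (\<lambda>x. m x * w (x - \<xi>') - m x * w (x - \<xi>))"
    using mw_int[OF mm mb, of \<xi>'] mw_int[OF mm mb, of \<xi>] by simp
  have i2: "integrable lborel (\<lambda>x. Kw * \<bar>\<xi>' - \<xi>\<bar> * exp (- a * \<bar>x - \<xi>\<bar>))"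
    using exp_abs_integrable[OF a_pos] by simp
  have le: "\<bar>LINT x|lborel. m x * w (x - \<xi>') - m x * w (x - \<xi>)\<bar> \<le> (LINT x|lborel. Kw * \<bar>\<xi>' - \<xi>\<bar> * exp (- a * \<bar>x - \<xi>\<bar>))"
    by (rule integral_abs_bound_integral[OF i1 i2 pw])
  have eq2: "(LINT x|lborel. Kw * \<bar>\<xi>' - \<xi>\<bar> * exp (- a * \<bar>x - \<xi>\<bar>)) = Kw * \<bar>\<xi>' - \<xi>\<bar> * E1"
    unfolding E1_def exp_abs_integral[of a \<xi>, symmetric] by simp
  show ?thesis using le unfolding eq[symmetric] eq2 by (simp add: mult_ac)
qed

lemma F_isCont:
  assumes mm: "m \<in> borel_measurable lborel" and mb: "\<And>x. \<bar>m x\<bar> \<le> 1"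
  shows "isCont (F m) \<xi>"
  unfolding continuous_at LIM_eq
proof (intro allI impI)
  fix e :: real assume e: "e > 0"
  define K where "K = Kw * E1 + 1"
  have "Kw * E1 \<ge> 0" using Kw_pos E1_nonneg by simp
  then have K: "K > 0" "Kw * E1 \<le> K" unfolding K_def by auto
  show "\<exists>s>0. \<forall>x. x \<noteq> \<xi> \<and> norm (x - \<xi>) < s \<longrightarrow> norm (F m x - F m \<xi>) < e"
  proof (intro exI[of _ "min 1 (e / K)"] conjI allI impI)
    show "0 < min 1 (e / K)" using e K by simp
    fix x assume x: "x \<noteq> \<xi> \<and> norm (x - \<xi>) < min 1 (e / K)"
    then have "\<bar>F m x - F m \<xi>\<bar> \<le> Kw * E1 * \<bar>x - \<xi>\<bar>" by (intro F_lip mm mb) auto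
    also have "\<dots> \<le> K * \<bar>x - \<xi>\<bar>" using K by (intro mult_right_mono) auto
    also have "\<dots> < K * (e / K)" using x K by (intro mult_strict_left_mono) auto
    also have "\<dots> = e" using K by simp
    finally show "norm (F m x - F m \<xi>) < e" by simp
  qed
qed

definition Lw where "Lw = Kw * sqrt (E2 + 1)"

lemma Lw_pos: "Lw > 0" using Kw_pos E2_nonneg by (simp add: Lw_def)

lemma pert_diff:
  assumes hm: "h \<in> borel_measurable lborel" and hi: "integrable lborel (\<lambda>x. (h x)\<^sup>2)"
    and hA: "(LINT x|lborel. (h x)\<^sup>2) \<le> A\<^sup>2" and A: "A > 0"
    and d: "\<bar>\<xi>2 - \<xi>1\<bar> \<le> 1" "\<xi>2 \<noteq> \<xi>1"
  shows "\<bar>LINT x|lborel. h x * (w (x - \<xi>2) - w (x - \<xi>1))\<bar> \<le> A * (Lw * \<bar>\<xi>2 - \<xi>1\<bar>)"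
proof (rule cs_bound(2)[OF hm _ hi _ hA _ A])
  show "(\<lambda>x. w (x - \<xi>2) - w (x - \<xi>1)) \<in> borel_measurable lborel" by measurable
  have pw: "(w (x - \<xi>2) - w (x - \<xi>1))\<^sup>2 \<le> (Kw * \<bar>\<xi>2 - \<xi>1\<bar>)\<^sup>2 * exp (- (2 * a) * \<bar>x - \<xi>1\<bar>)" for x
  proof -
    have "\<bar>w (x - \<xi>1) - w (x - \<xi>2)\<bar> \<le> Kw * exp (- a * \<bar>x - \<xi>1\<bar>) * \<bar>(x - \<xi>1) - (x - \<xi>2)\<bar>"
      using d by (intro w_lip) auto
    then have "\<bar>w (x - \<xi>2) - w (x - \<xi>1)\<bar> \<le> Kw * \<bar>\<xi>2 - \<xi>1\<bar> * exp (- a * \<bar>x - \<xi>1\<bar>)"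
      by (simp add: abs_minus_commute algebra_simps)
    then have "\<bar>w (x - \<xi>2) - w (x - \<xi>1)\<bar>\<^sup>2 \<le> (Kw * \<bar>\<xi>2 - \<xi>1\<bar> * exp (- a * \<bar>x - \<xi>1\<bar>))\<^sup>2"
      by (rule power_mono) simp
    then have "(w (x - \<xi>2) - w (x - \<xi>1))\<^sup>2 \<le> (Kw * \<bar>\<xi>2 - \<xi>1\<bar> * exp (- a * \<bar>x - \<xi>1\<bar>))\<^sup>2"
      by simp
    also have "\<dots> = (Kw * \<bar>\<xi>2 - \<xi>1\<bar>)\<^sup>2 * exp (- (2 * a) * \<bar>x - \<xi>1\<bar>)"
      by (simp add: power_mult_distrib power2_eq_square flip: exp_add)
    finally show ?thesis .
  qed
  have bi: "integrable lborel (\<lambda>x. (Kw * \<bar>\<xi>2 - \<xi>1\<bar>)\<^sup>2 * exp (- (2 * a) * \<bar>x - \<xi>1\<bar>))"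
    using exp_abs_integrable[of "2 * a" \<xi>1] a_pos by simp
  show gi: "integrable lborel (\<lambda>x. (w (x - \<xi>2) - w (x - \<xi>1))\<^sup>2)"
  proof (rule Bochner_Integration.integrable_bound[OF bi])
    show "(\<lambda>x. (w (x - \<xi>2) - w (x - \<xi>1))\<^sup>2) \<in> borel_measurable lborel" by measurable
    show "AE x in lborel. norm ((w (x - \<xi>2) - w (x - \<xi>1))\<^sup>2) \<le> norm ((Kw * \<bar>\<xi>2 - \<xi>1\<bar>)\<^sup>2 * exp (- (2 * a) * \<bar>x - \<xi>1\<bar>))"
      using pw by (intro AE_I2) simp
  qed
  have "(LINT x|lborel. (w (x - \<xi>2) - w (x - \<xi>1))\<^sup>2) \<le> (LINT x|lborel. (Kw * \<bar>\<xi>2 - \<xi>1\<bar>)\<^sup>2 * exp (- (2 * a) * \<bar>x - \<xi>1\<bar>))"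
    by (rule integral_mono[OF gi bi pw])
  also have "\<dots> = (Kw * \<bar>\<xi>2 - \<xi>1\<bar>)\<^sup>2 * E2"
    unfolding E2_def exp_abs_integral[of "2 * a" \<xi>1, symmetric] by simp
  also have "\<dots> \<le> (Kw * \<bar>\<xi>2 - \<xi>1\<bar>)\<^sup>2 * (E2 + 1)" by (intro mult_left_mono) auto
  also have "\<dots> = (Lw * \<bar>\<xi>2 - \<xi>1\<bar>)\<^sup>2"
    using E2_nonneg by (simp add: Lw_def power_mult_distrib)
  finally show "(LINT x|lborel. (w (x - \<xi>2) - w (x - \<xi>1))\<^sup>2) \<le> (Lw * \<bar>\<xi>2 - \<xi>1\<bar>)\<^sup>2" .
  show "Lw * \<bar>\<xi>2 - \<xi>1\<bar> > 0" using Lw_pos d by simp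
qed

lemma pert_single:
  assumes hm: "h \<in> borel_measurable lborel" and hi: "integrable lborel (\<lambda>x. (h x)\<^sup>2)"
    and hA: "(LINT x|lborel. (h x)\<^sup>2) \<le> A\<^sup>2" and A: "A > 0"
  shows "\<bar>LINT x|lborel. h x * w (x - \<xi>)\<bar> \<le> A * sqrt W2"
proof (rule cs_bound(2)[OF hm _ hi w2_int hA _ A])
  show "(\<lambda>x. w (x - \<xi>)) \<in> borel_measurable lborel" by measurable
  show "(LINT x|lborel. (w (x - \<xi>))\<^sup>2) \<le> (sqrt W2)\<^sup>2" using W2_shift W2_pos by simp
  show "sqrt W2 > 0" using W2_pos by simp
qed

end

context front begin

definition \<delta>0 where "\<delta>0 = min (\<kappa> * r / (4 * sqrt W2)) (\<kappa> / (2 * Lw))"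

lemma delta0_pos: "\<delta>0 > 0"
  using kappa_pos r_pos W2_pos Lw_pos by (simp add: \<delta>0_def)

lemma delta0_le1: "\<delta>0 * sqrt W2 \<le> \<kappa> * r / 4"
proof -
  have "\<delta>0 \<le> \<kappa> * r / (4 * sqrt W2)" by (simp add: \<delta>0_def)
  then show ?thesis using W2_pos by (simp add: pos_le_divide_eq field_simps)
qed

lemma delta0_le2: "\<delta>0 * Lw \<le> \<kappa> / 2"
proof -
  have "\<delta>0 \<le> \<kappa> / (2 * Lw)" by (simp add: \<delta>0_def)
  then show ?thesis using Lw_pos by (simp add: pos_le_divide_eq field_simps)
qed

lemma Linf_D: assumes "Linf_pm1 m" shows "m \<in> borel_measurable lborel" "\<And>x. \<bar>m x\<bar> \<le> 1"
  using assms by (auto simp: Linf_pm1_def)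

lemma mbar_shift_meas: "(\<lambda>x. mbar (x - \<xi>0)) \<in> borel_measurable lborel" by measurable

lemma F_split:
  assumes "Linf_pm1 m"
  shows "F m \<xi> - G (\<xi> - \<xi>0) = (LINT x|lborel. (m x - mbar (x - \<xi>0)) * w (x - \<xi>))"
proof -
  note L = Linf_D[OF assms]
  have i1: "integrable lborel (\<lambda>x. m x * w (x - \<xi>))" by (rule mw_int[OF L])
  have i2: "integrable lborel (\<lambda>x. mbar (x - \<xi>0) * w (x - \<xi>))"
    by (rule mw_int[OF mbar_shift_meas mbar_abs1])
  have e: "(\<lambda>x. (m x - mbar (x - \<xi>0)) * w (x - \<xi>)) = (\<lambda>x. m x * w (x - \<xi>) - mbar (x - \<xi>0) * w (x - \<xi>))"
    by (rule ext) (simp add: left_diff_distrib)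
  show ?thesis unfolding e F_mbar[symmetric] F_def
    by (simp add: Bochner_Integration.integral_diff[OF i1 i2])
qed

lemma near_est:
  assumes m: "Linf_pm1 m" and d: "L2sq_dist m (\<lambda>x. mbar (x - \<xi>0)) < ennreal (\<delta>0\<^sup>2)"
  shows "\<And>\<xi>. \<bar>F m \<xi> - G (\<xi> - \<xi>0)\<bar> \<le> \<kappa> * r / 4"
    and "\<And>\<xi>1 \<xi>2. \<bar>\<xi>2 - \<xi>1\<bar> \<le> 1 \<Longrightarrow>
           \<bar>(F m \<xi>2 - G (\<xi>2 - \<xi>0)) - (F m \<xi>1 - G (\<xi>1 - \<xi>0))\<bar> \<le> \<kappa> / 2 * \<bar>\<xi>2 - \<xi>1\<bar>"
proof -
  note L = Linf_D[OF m]
  define h where "h x = m x - mbar (x - \<xi>0)" for x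
  have hm: "h \<in> borel_measurable lborel" unfolding h_def using L(1) by measurable
  have hb: "\<And>x. \<bar>h x\<bar> \<le> 2" unfolding h_def using L(2) mbar_abs1 by (smt (verit))
  have fin: "(\<integral>\<^sup>+ x. ennreal ((h x)\<^sup>2) \<partial>lborel) < ennreal (\<delta>0\<^sup>2)"
    using d unfolding L2sq_dist_def h_def .
  have hi: "integrable lborel (\<lambda>x. (h x)\<^sup>2)" and hl: "(LINT x|lborel. (h x)\<^sup>2) < \<delta>0\<^sup>2"
    using nn_to_real[OF _ _ fin] hm by auto
  have hA: "(LINT x|lborel. (h x)\<^sup>2) \<le> \<delta>0\<^sup>2" using hl by simp
  fix \<xi>
  have "\<bar>F m \<xi> - G (\<xi> - \<xi>0)\<bar> \<le> \<delta>0 * sqrt W2"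
    using pert_single[OF hm hi hA delta0_pos, of \<xi>] F_split[OF m, of \<xi> \<xi>0] unfolding h_def by simp
  then show "\<bar>F m \<xi> - G (\<xi> - \<xi>0)\<bar> \<le> \<kappa> * r / 4" using delta0_le1 by linarith
next
  note L = Linf_D[OF m]
  define h where "h x = m x - mbar (x - \<xi>0)" for x
  have hm: "h \<in> borel_measurable lborel" unfolding h_def using L(1) by measurable
  have fin: "(\<integral>\<^sup>+ x. ennreal ((h x)\<^sup>2) \<partial>lborel) < ennreal (\<delta>0\<^sup>2)"
    using d unfolding L2sq_dist_def h_def .
  have hi: "integrable lborel (\<lambda>x. (h x)\<^sup>2)" and hl: "(LINT x|lborel. (h x)\<^sup>2) < \<delta>0\<^sup>2"
    using nn_to_real[OF _ _ fin] hm by auto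
  have hA: "(LINT x|lborel. (h x)\<^sup>2) \<le> \<delta>0\<^sup>2" using hl by simp
  fix \<xi>1 \<xi>2 :: real assume d1: "\<bar>\<xi>2 - \<xi>1\<bar> \<le> 1"
  show "\<bar>(F m \<xi>2 - G (\<xi>2 - \<xi>0)) - (F m \<xi>1 - G (\<xi>1 - \<xi>0))\<bar> \<le> \<kappa> / 2 * \<bar>\<xi>2 - \<xi>1\<bar>"
  proof (cases "\<xi>2 = \<xi>1")
    case True then show ?thesis by simp
  next
    case False
    have i1: "integrable lborel (\<lambda>x. h x * w (x - \<xi>2))"
      using mw_int[OF L, of \<xi>2] mw_int[OF mbar_shift_meas mbar_abs1, of \<xi>0 \<xi>2]
      unfolding h_def by (simp add: left_diff_distrib)
    have i2: "integrable lborel (\<lambda>x. h x * w (x - \<xi>1))"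
      using mw_int[OF L, of \<xi>1] mw_int[OF mbar_shift_meas mbar_abs1, of \<xi>0 \<xi>1]
      unfolding h_def by (simp add: left_diff_distrib)
    have e: "(F m \<xi>2 - G (\<xi>2 - \<xi>0)) - (F m \<xi>1 - G (\<xi>1 - \<xi>0)) = (LINT x|lborel. h x * (w (x - \<xi>2) - w (x - \<xi>1)))"
      unfolding F_split[OF m] h_def[symmetric] right_diff_distrib
      by (simp add: Bochner_Integration.integral_diff[OF i1 i2])
    have "\<bar>LINT x|lborel. h x * (w (x - \<xi>2) - w (x - \<xi>1))\<bar> \<le> \<delta>0 * (Lw * \<bar>\<xi>2 - \<xi>1\<bar>)"
      by (rule pert_diff[OF hm hi hA delta0_pos d1 False])
    moreover have "\<delta>0 * (Lw * \<bar>\<xi>2 - \<xi>1\<bar>) \<le> \<kappa> / 2 * \<bar>\<xi>2 - \<xi>1\<bar>"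
      using mult_right_mono[OF delta0_le2 abs_ge_zero[of "\<xi>2 - \<xi>1"]] by (simp add: mult.assoc)
    ultimately show ?thesis unfolding e by linarith
  qed
qed

end

context front begin

definition NE where "NE m \<xi>0 \<longleftrightarrow> Linf_pm1 m \<and> L2sq_dist m (\<lambda>x. mbar (x - \<xi>0)) < ennreal (\<delta>0\<^sup>2)"

lemma NE_pos:
  assumes "NE m \<xi>0" and "\<xi> - \<xi>0 \<ge> r"
  shows "F m \<xi> \<ge> 3 * (\<kappa> * r) / 4"
proof -
  have "\<bar>F m \<xi> - G (\<xi> - \<xi>0)\<bar> \<le> \<kappa> * r / 4" using near_est(1) assms(1) unfolding NE_def by blast
  moreover have "G (\<xi> - \<xi>0) \<ge> \<kappa> * r" by (rule G_pos) (use assms in auto)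
  ultimately show ?thesis by linarith
qed

lemma NE_neg:
  assumes "NE m \<xi>0" and "\<xi> - \<xi>0 \<le> - r"
  shows "F m \<xi> \<le> - (3 * (\<kappa> * r) / 4)"
proof -
  have "\<bar>F m \<xi> - G (\<xi> - \<xi>0)\<bar> \<le> \<kappa> * r / 4" using near_est(1) assms(1) unfolding NE_def by blast
  moreover have "G (\<xi> - \<xi>0) \<le> - (\<kappa> * r)" by (rule G_neg) (use assms in auto)
  ultimately show ?thesis by linarith
qed

lemma kr_pos: "\<kappa> * r > 0" using kappa_pos r_pos by simp

lemma NE_exists:
  assumes "NE m \<xi>0"
  shows "\<exists>\<xi>. F m \<xi> = 0"
proof -
  have L: "m \<in> borel_measurable lborel" "\<And>x. \<bar>m x\<bar> \<le> 1"
    using assms Linf_D unfolding NE_def by auto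
  have "F m (\<xi>0 - r) \<le> 0" using NE_neg[OF assms, of "\<xi>0 - r"] kr_pos by simp
  moreover have "0 \<le> F m (\<xi>0 + r)" using NE_pos[OF assms, of "\<xi>0 + r"] kr_pos by simp
  moreover have "\<xi>0 - r \<le> \<xi>0 + r" using r_pos by simp
  ultimately show ?thesis using IVT[of "F m" "\<xi>0 - r" 0 "\<xi>0 + r"] F_isCont[OF L] by blast
qed

lemma NE_loc:
  assumes "NE m \<xi>0" and "\<bar>F m \<xi>\<bar> < \<kappa> * r / 2"
  shows "\<bar>\<xi> - \<xi>0\<bar> < r"
proof (rule ccontr)
  assume "\<not> \<bar>\<xi> - \<xi>0\<bar> < r"
  then have "\<xi> - \<xi>0 \<ge> r \<or> \<xi> - \<xi>0 \<le> - r" by auto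
  then show False
  proof
    assume "\<xi> - \<xi>0 \<ge> r" then have "F m \<xi> \<ge> 3 * (\<kappa> * r) / 4" by (rule NE_pos[OF assms(1)])
    then show False using assms(2) kr_pos by linarith
  next
    assume "\<xi> - \<xi>0 \<le> - r" then have "F m \<xi> \<le> - (3 * (\<kappa> * r) / 4)" by (rule NE_neg[OF assms(1)])
    then show False using assms(2) kr_pos by linarith
  qed
qed

lemma NE_sep_lt:
  assumes "NE m \<xi>0" and "\<bar>\<xi>1 - \<xi>0\<bar> \<le> r" "\<bar>\<xi>2 - \<xi>0\<bar> \<le> r" and "\<xi>1 < \<xi>2"
  shows "F m \<xi>2 - F m \<xi>1 \<ge> \<kappa> / 2 * (\<xi>2 - \<xi>1)"
proof -
  have d1: "\<bar>\<xi>2 - \<xi>1\<bar> \<le> 1" using assms r_le by auto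
  have A: "\<bar>(F m \<xi>2 - G (\<xi>2 - \<xi>0)) - (F m \<xi>1 - G (\<xi>1 - \<xi>0))\<bar> \<le> \<kappa> / 2 * \<bar>\<xi>2 - \<xi>1\<bar>"
    using near_est(2) assms(1) d1 unfolding NE_def by blast
  have B: "G (\<xi>2 - \<xi>0) - G (\<xi>1 - \<xi>0) \<ge> \<kappa> * ((\<xi>2 - \<xi>0) - (\<xi>1 - \<xi>0))"
    by (rule G_lower) (use assms in auto)
  have C: "\<kappa> * ((\<xi>2 - \<xi>0) - (\<xi>1 - \<xi>0)) = 2 * (\<kappa> / 2 * (\<xi>2 - \<xi>1))" by (simp add: algebra_simps)
  have D: "\<kappa> / 2 * \<bar>\<xi>2 - \<xi>1\<bar> = \<kappa> / 2 * (\<xi>2 - \<xi>1)" using assms(4) by simp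
  show ?thesis using A B C D by linarith
qed

lemma NE_sep:
  assumes "NE m \<xi>0" and "\<bar>\<xi>1 - \<xi>0\<bar> \<le> r" "\<bar>\<xi>2 - \<xi>0\<bar> \<le> r"
  shows "\<kappa> / 2 * \<bar>\<xi>2 - \<xi>1\<bar> \<le> \<bar>F m \<xi>2 - F m \<xi>1\<bar>"
proof (cases \<xi>1 \<xi>2 rule: linorder_cases)
  case less
  have "\<kappa> / 2 * \<bar>\<xi>2 - \<xi>1\<bar> = \<kappa> / 2 * (\<xi>2 - \<xi>1)" using less by simp
  then show ?thesis using NE_sep_lt[OF assms less] abs_ge_self[of "F m \<xi>2 - F m \<xi>1"] by linarith
next
  case equal then show ?thesis by simp
next
  case greater
  have "\<kappa> / 2 * \<bar>\<xi>2 - \<xi>1\<bar> = \<kappa> / 2 * (\<xi>1 - \<xi>2)" using greater by simp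
  then show ?thesis using NE_sep_lt[OF assms(1,3,2) greater] abs_ge_minus_self[of "F m \<xi>2 - F m \<xi>1"] by linarith
qed

lemma NE_unique:
  assumes "NE m \<xi>0" "F m \<xi>1 = 0" "F m \<xi>2 = 0"
  shows "\<xi>1 = \<xi>2"
proof -
  have "\<bar>\<xi>1 - \<xi>0\<bar> < r" "\<bar>\<xi>2 - \<xi>0\<bar> < r"
    using NE_loc[OF assms(1)] assms(2,3) kr_pos by auto
  then have "\<kappa> / 2 * \<bar>\<xi>2 - \<xi>1\<bar> \<le> \<bar>F m \<xi>2 - F m \<xi>1\<bar>" by (intro NE_sep[OF assms(1)]) auto
  then have "\<kappa> / 2 * \<bar>\<xi>2 - \<xi>1\<bar> \<le> 0" using assms(2,3) by simp
  then show ?thesis using kappa_pos by (simp add: mult_le_0_iff)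
qed

lemma NE_key:
  assumes "NE m \<xi>0" "F m \<xi>c = 0" "\<bar>F m \<xi>\<bar> < \<kappa> * r / 2"
  shows "\<bar>\<xi> - \<xi>c\<bar> \<le> 2 / \<kappa> * \<bar>F m \<xi>\<bar>"
proof -
  have "\<bar>\<xi>c - \<xi>0\<bar> < r" using NE_loc[OF assms(1)] assms(2) kr_pos by auto
  moreover have "\<bar>\<xi> - \<xi>0\<bar> < r" using NE_loc[OF assms(1) assms(3)] .
  ultimately have "\<kappa> / 2 * \<bar>\<xi> - \<xi>c\<bar> \<le> \<bar>F m \<xi> - F m \<xi>c\<bar>" by (intro NE_sep[OF assms(1)]) auto
  then have "\<kappa> / 2 * \<bar>\<xi> - \<xi>c\<bar> \<le> \<bar>F m \<xi>\<bar>" using assms(2) by simp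
  then show ?thesis using kappa_pos by (simp add: field_simps)
qed

end

context front begin

lemma W1_shift: "(LINT x|lborel. w (x - \<xi>)) = W1"
  using lborel_integral_real_affine[of 1 "\<lambda>x. w (x - \<xi>)" \<xi>] unfolding W1_def by simp

lemma W1_pos: "W1 > 0"
proof -
  have "W2 \<le> (LINT x|lborel. Cw * w x)"
    unfolding W2_def
  proof (rule integral_mono)
    show "integrable lborel (\<lambda>x. (w x)\<^sup>2)" using w2_int[of 0] by simp
    show "integrable lborel (\<lambda>x. Cw * w x)" using w_int by simp
    fix x show "(w x)\<^sup>2 \<le> Cw * w x"
      unfolding power2_eq_square using w_le w_nonneg by (intro mult_right_mono) auto
  qed
  also have "\<dots> = Cw * W1" unfolding W1_def by simp
  finally have "W2 \<le> Cw * W1" .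
  then have "0 < Cw * W1" using W2_pos by linarith
  then show ?thesis using Cw_pos by (simp add: zero_less_mult_iff)
qed

lemma F_pos_exists:
  assumes mm: "m \<in> borel_measurable lborel" and mb: "\<And>x. \<bar>m x\<bar> \<le> 1"
    and eta: "\<eta> > 0" and X: "\<And>x. x \<ge> X \<Longrightarrow> m x \<ge> \<eta>"
  shows "\<exists>\<xi>. F m \<xi> > 0"
proof -
  define b where "b = a / 2"
  have b: "b > 0" "a = 2 * b" using a_pos by (auto simp: b_def)
  define Eh where "Eh = (LINT x|lborel. exp (- b * \<bar>x\<bar>))"
  have Eh: "Eh \<ge> 0" unfolding Eh_def by simp
  define \<tau> where "\<tau> = \<eta> * W1 / ((1 + \<eta>) * Cw * (Eh + 1))"
  have tau: "\<tau> > 0" unfolding \<tau>_def using eta W1_pos Cw_pos Eh by simp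
  define s where "s = 1 / \<tau> + 1"
  have "1 / \<tau> > 0" using tau by simp
  then have s: "s > 0" unfolding s_def by linarith
  have es: "exp (- s) < \<tau>"
  proof -
    have "1 + s \<le> exp s" by (rule exp_ge_add_one_self)
    moreover have "1 / \<tau> < 1 + s" unfolding s_def by linarith
    ultimately have "1 / \<tau> < exp s" by linarith
    then have "1 / exp s < \<tau>" using tau by (simp add: field_simps)
    then show ?thesis by (simp add: exp_minus field_simps)
  qed
  define \<xi> where "\<xi> = X + s / b"
  define T where "T x = Cw * exp (- s) * exp (- b * \<bar>x - \<xi>\<bar>)" for x
  have T0: "T x \<ge> 0" for x unfolding T_def using Cw_pos by simp
  have pw: "\<eta> * w (x - \<xi>) - (1 + \<eta>) * T x \<le> m x * w (x - \<xi>)" for x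
  proof (cases "x \<ge> X")
    case True
    have "\<eta> * w (x - \<xi>) \<le> m x * w (x - \<xi>)" using X[OF True] w_nonneg by (intro mult_right_mono) auto
    moreover have "(1 + \<eta>) * T x \<ge> 0" using T0 eta by simp
    ultimately show ?thesis by linarith
  next
    case False
    have d: "\<bar>x - \<xi>\<bar> \<ge> s / b" using False s b by (simp add: \<xi>_def)
    have "b * (s / b) \<le> b * \<bar>x - \<xi>\<bar>" using d b by (intro mult_left_mono) auto
    then have "- b * \<bar>x - \<xi>\<bar> \<le> - s" using b by simp
    then have e1: "exp (- b * \<bar>x - \<xi>\<bar>) \<le> exp (- s)" by simp
    have "exp (- a * \<bar>x - \<xi>\<bar>) = exp (- b * \<bar>x - \<xi>\<bar>) * exp (- b * \<bar>x - \<xi>\<bar>)"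
      by (simp add: b(2) flip: exp_add)
    also have "\<dots> \<le> exp (- s) * exp (- b * \<bar>x - \<xi>\<bar>)" using e1 by (intro mult_right_mono) auto
    finally have "exp (- a * \<bar>x - \<xi>\<bar>) \<le> exp (- s) * exp (- b * \<bar>x - \<xi>\<bar>)" .
    then have "Cw * exp (- a * \<bar>x - \<xi>\<bar>) \<le> Cw * (exp (- s) * exp (- b * \<bar>x - \<xi>\<bar>))"
      using Cw_pos by (intro mult_left_mono) auto
    then have wT: "w (x - \<xi>) \<le> T x" using w_decay[of "x - \<xi>"] unfolding T_def by (simp add: mult.assoc)
    have "- w (x - \<xi>) \<le> m x * w (x - \<xi>)"
    proof -
      have "\<bar>m x\<bar> * \<bar>w (x - \<xi>)\<bar> \<le> 1 * \<bar>w (x - \<xi>)\<bar>"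
        using mb[of x] by (intro mult_right_mono) auto
      then have "\<bar>m x * w (x - \<xi>)\<bar> \<le> w (x - \<xi>)"
        using w_nonneg[of "x - \<xi>"] by (simp add: abs_mult)
      then show ?thesis by (simp add: abs_le_iff)
    qed
    moreover have "\<eta> * w (x - \<xi>) \<le> \<eta> * T x" using wT eta by (intro mult_left_mono) auto
    ultimately show ?thesis using wT by (simp add: algebra_simps)
  qed
  have iT: "integrable lborel T" unfolding T_def using exp_abs_integrable[OF b(1), of \<xi>] by simp
  have i1: "integrable lborel (\<lambda>x. \<eta> * w (x - \<xi>) - (1 + \<eta>) * T x)"
    using w_shift_int[of \<xi>] iT by simp
  have le: "(LINT x|lborel. \<eta> * w (x - \<xi>) - (1 + \<eta>) * T x) \<le> F m \<xi>"
    unfolding F_def by (rule integral_mono[OF i1 mw_int[OF mm mb] pw])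
  have IT: "(LINT x|lborel. T x) = Cw * exp (- s) * Eh"
    unfolding T_def Eh_def exp_abs_integral[of b \<xi>, symmetric] by simp
  have eq: "(LINT x|lborel. \<eta> * w (x - \<xi>) - (1 + \<eta>) * T x) = \<eta> * W1 - (1 + \<eta>) * (Cw * exp (- s) * Eh)"
    using w_shift_int[of \<xi>] iT W1_shift[of \<xi>] IT by simp
  have "(1 + \<eta>) * (Cw * exp (- s) * Eh) \<le> (1 + \<eta>) * Cw * exp (- s) * (Eh + 1)"
    using eta Cw_pos by (simp add: algebra_simps)
  also have "\<dots> < (1 + \<eta>) * Cw * \<tau> * (Eh + 1)"
    using es eta Cw_pos Eh by (intro mult_strict_right_mono mult_strict_left_mono) auto
  also have "\<dots> = \<eta> * W1"
  proof -
    have D: "(1 + \<eta>) * Cw * (Eh + 1) \<noteq> 0" using eta Cw_pos Eh by simp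
    have "(1 + \<eta>) * Cw * \<tau> * (Eh + 1) = ((1 + \<eta>) * Cw * (Eh + 1)) * \<tau>" by (simp add: mult_ac)
    also have "\<dots> = \<eta> * W1" unfolding \<tau>_def using D by simp
    finally show ?thesis .
  qed
  finally have "(1 + \<eta>) * (Cw * exp (- s) * Eh) < \<eta> * W1" .
  then show ?thesis using le eq by (intro exI[of _ \<xi>]) linarith
qed

lemma F_reflect:
  "F (\<lambda>x. - m (- x)) \<xi> = - F m (- \<xi>)"
proof -
  have "F (\<lambda>x. - m (- x)) \<xi> = (LINT x|lborel. - m (- (0 + (-1) * x)) * w (0 + (-1) * x - \<xi>))"
    unfolding F_def using lborel_integral_real_affine[of "-1" "\<lambda>x. - m (- x) * w (x - \<xi>)" 0] by simp
  also have "\<dots> = (LINT x|lborel. - (m x * w (x - - \<xi>)))"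
  proof -
    have "w (- x - \<xi>) = w (x + \<xi>)" for x
    proof -
      have "- x - \<xi> = - (x + \<xi>)" by simp
      then show ?thesis using w_even[of "x + \<xi>"] by metis
    qed
    then show ?thesis by simp
  qed
  also have "\<dots> = - F m (- \<xi>)" unfolding F_def by simp
  finally show ?thesis .
qed

lemma classN_center:
  assumes "classN m"
  shows "\<exists>\<xi>. F m \<xi> = 0"
proof -
  have L: "Linf_pm1 m" and ls: "Limsup at_bot (\<lambda>x. ereal (m x)) < 0"
    and li: "Liminf at_top (\<lambda>x. ereal (m x)) > 0" using assms unfolding classN_def by auto
  note LL = Linf_D[OF L]
  obtain z1 where z1: "0 < ereal z1" "ereal z1 < Liminf at_top (\<lambda>x. ereal (m x))"
    using ereal_dense2[OF li] by blast
  have "eventually (\<lambda>x. ereal (m x) > ereal z1) at_top" by (rule less_LiminfD[OF z1(2)])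
  then obtain X1 where X1: "\<And>x. x \<ge> X1 \<Longrightarrow> m x > z1" unfolding eventually_at_top_linorder by auto
  obtain z2 where z2: "Limsup at_bot (\<lambda>x. ereal (m x)) < ereal z2" "ereal z2 < 0"
    using ereal_dense2[OF ls] by blast
  have "eventually (\<lambda>x. ereal (m x) < ereal z2) at_bot" by (rule Limsup_lessD[OF z2(1)])
  then obtain X2 where X2: "\<And>x. x \<le> X2 \<Longrightarrow> m x < z2" unfolding eventually_at_bot_linorder by auto
  have "\<exists>\<xi>. F m \<xi> > 0"
    by (rule F_pos_exists[OF LL, of z1 X1]) (use z1 X1 in \<open>auto intro: less_imp_le\<close>)
  then obtain \<xi>p where p: "F m \<xi>p > 0" by blast
  have mm': "(\<lambda>x. - m (- x)) \<in> borel_measurable lborel" using LL(1) by measurable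
  have "\<exists>\<xi>. F (\<lambda>x. - m (- x)) \<xi> > 0"
  proof (rule F_pos_exists[OF mm', of "- z2" "- X2"])
    show "\<And>x. \<bar>- m (- x)\<bar> \<le> 1" using LL(2) by simp
    show "0 < - z2" using z2 by simp
    fix x :: real assume "x \<ge> - X2"
    then have "m (- x) < z2" using X2 by simp
    then show "- z2 \<le> - m (- x)" by simp
  qed
  then obtain \<xi>' where "F (\<lambda>x. - m (- x)) \<xi>' > 0" by blast
  then have n: "F m (- \<xi>') < 0" unfolding F_reflect by simp
  define \<xi>n where "\<xi>n = - \<xi>'"
  have n': "F m \<xi>n < 0" using n by (simp add: \<xi>n_def)
  show ?thesis
  proof (cases "\<xi>n \<le> \<xi>p")
    case True
    then show ?thesis using IVT[of "F m" \<xi>n 0 \<xi>p] n' p F_isCont[OF LL] by force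
  next
    case False
    then show ?thesis using IVT2[of "F m" \<xi>n 0 \<xi>p] n' p F_isCont[OF LL] by force
  qed
qed

end

context front begin

lemma F_diff:
  assumes m: "Linf_pm1 m" and n: "Linf_pm1 n"
  shows "F n \<xi> - F m \<xi> = (LINT x|lborel. (n x - m x) * w (x - \<xi>))"
proof -
  have i1: "integrable lborel (\<lambda>x. n x * w (x - \<xi>))" by (rule mw_int[OF Linf_D[OF n]])
  have i2: "integrable lborel (\<lambda>x. m x * w (x - \<xi>))" by (rule mw_int[OF Linf_D[OF m]])
  have e: "(\<lambda>x. (n x - m x) * w (x - \<xi>)) = (\<lambda>x. n x * w (x - \<xi>) - m x * w (x - \<xi>))"
    by (rule ext) (simp add: left_diff_distrib)
  show ?thesis unfolding e F_def by (simp add: Bochner_Integration.integral_diff[OF i1 i2])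
qed

lemma L1_est:
  assumes m: "Linf_pm1 m" and n: "Linf_pm1 n" and d: "L1_dist m n < ennreal \<epsilon>"
  shows "\<exists>lv. L1_dist m n = ennreal lv \<and> 0 \<le> lv \<and> lv < \<epsilon> \<and> \<bar>F n \<xi> - F m \<xi>\<bar> \<le> Cw * lv"
proof -
  note Lm = Linf_D[OF m] and Ln = Linf_D[OF n]
  have fm: "(\<lambda>x. \<bar>m x - n x\<bar>) \<in> borel_measurable lborel" using Lm(1) Ln(1) by measurable
  have fin: "(\<integral>\<^sup>+ x. ennreal (\<bar>m x - n x\<bar>) \<partial>lborel) < ennreal \<epsilon>" using d unfolding L1_dist_def .
  note R = nn_to_real[OF fm _ fin]
  define lv where "lv = (LINT x|lborel. \<bar>m x - n x\<bar>)"
  have l0: "lv \<ge> 0" unfolding lv_def by simp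
  have ii: "integrable lborel (\<lambda>x. \<bar>m x - n x\<bar>)" using R(1) by simp
  have i1: "integrable lborel (\<lambda>x. (n x - m x) * w (x - \<xi>))"
    using mw_int[OF Ln, of \<xi>] mw_int[OF Lm, of \<xi>] by (simp add: left_diff_distrib)
  have i2: "integrable lborel (\<lambda>x. Cw * \<bar>m x - n x\<bar>)" using ii by simp
  have "\<bar>LINT x|lborel. (n x - m x) * w (x - \<xi>)\<bar> \<le> (LINT x|lborel. Cw * \<bar>m x - n x\<bar>)"
  proof (rule integral_abs_bound_integral[OF i1 i2])
    fix x
    have "\<bar>m x - n x\<bar> * \<bar>w (x - \<xi>)\<bar> \<le> \<bar>m x - n x\<bar> * Cw"
      using w_le[of "x - \<xi>"] w_nonneg[of "x - \<xi>"] by (intro mult_left_mono) auto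
    moreover have "\<bar>n x - m x\<bar> = \<bar>m x - n x\<bar>" by (rule abs_minus_commute)
    ultimately have "\<bar>n x - m x\<bar> * \<bar>w (x - \<xi>)\<bar> \<le> \<bar>m x - n x\<bar> * Cw" by simp
    then show "\<bar>(n x - m x) * w (x - \<xi>)\<bar> \<le> Cw * \<bar>m x - n x\<bar>" by (simp add: abs_mult mult.commute)
  qed
  moreover have "(LINT x|lborel. Cw * \<bar>m x - n x\<bar>) = Cw * lv" unfolding lv_def by simp
  ultimately have "\<bar>F n \<xi> - F m \<xi>\<bar> \<le> Cw * lv" unfolding F_diff[OF m n] by (simp only:)
  then show ?thesis using R(2,3) l0 unfolding L1_dist_def lv_def by auto
qed

lemma L2_est:
  assumes m: "Linf_pm1 m" and n: "Linf_pm1 n" and d: "L2sq_dist m n < ennreal D"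
  shows "\<exists>lv. L2sq_dist m n = ennreal lv \<and> 0 \<le> lv \<and> lv < D \<and>
            (\<forall>A>0. lv \<le> A\<^sup>2 \<longrightarrow> \<bar>F n \<xi> - F m \<xi>\<bar> \<le> A * sqrt W2)"
proof -
  note Lm = Linf_D[OF m] and Ln = Linf_D[OF n]
  have fm: "(\<lambda>x. (m x - n x)\<^sup>2) \<in> borel_measurable lborel" using Lm(1) Ln(1) by measurable
  have fin: "(\<integral>\<^sup>+ x. ennreal ((m x - n x)\<^sup>2) \<partial>lborel) < ennreal D" using d unfolding L2sq_dist_def .
  note R = nn_to_real[OF fm _ fin]
  define lv where "lv = (LINT x|lborel. (m x - n x)\<^sup>2)"
  have l0: "lv \<ge> 0" unfolding lv_def by simp
  have hm: "(\<lambda>x. n x - m x) \<in> borel_measurable lborel" using Lm(1) Ln(1) by measurable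
  have e2: "(\<lambda>x. (n x - m x)\<^sup>2) = (\<lambda>x. (m x - n x)\<^sup>2)" by (rule ext) (simp add: power2_commute)
  have hi: "integrable lborel (\<lambda>x. (n x - m x)\<^sup>2)" unfolding e2 using R(1) by simp
  have "\<forall>A>0. lv \<le> A\<^sup>2 \<longrightarrow> \<bar>F n \<xi> - F m \<xi>\<bar> \<le> A * sqrt W2"
  proof (intro allI impI)
    fix A :: real assume A: "A > 0" "lv \<le> A\<^sup>2"
    have hA: "(LINT x|lborel. (n x - m x)\<^sup>2) \<le> A\<^sup>2" unfolding e2 using A(2) by (simp add: lv_def)
    show "\<bar>F n \<xi> - F m \<xi>\<bar> \<le> A * sqrt W2"
      unfolding F_diff[OF m n] by (rule pert_single[OF hm hi hA A(1)])
  qed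
  then show ?thesis using R(2,3) l0 unfolding L2sq_dist_def lv_def by auto
qed

end

context front begin

lemma M1_NE: "M1 mbar \<delta>0 m \<Longrightarrow> \<exists>\<xi>0. NE m \<xi>0"
  unfolding M1_def NE_def by auto

lemma sq_le: "\<bar>d\<bar> \<le> B \<Longrightarrow> d\<^sup>2 \<le> (B::real)\<^sup>2"
  using power_mono[of "\<bar>d\<bar>" B 2] by simp

lemma part_b_L1:
  assumes NEm: "NE m \<xi>0" and Mn: "M1 mbar \<delta>0 n"
    and d: "L1_dist m n < ennreal (\<kappa> * r / (2 * Cw))"
    and cm: "is_center mbar m \<xi>m" and cn: "is_center mbar n \<xi>n"
    and c: "c \<ge> 2 * Cw / \<kappa>"
  shows "ennreal \<bar>\<xi>m - \<xi>n\<bar> \<le> ennreal c * L1_dist m n"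
proof -
  have Lm: "Linf_pm1 m" using NEm unfolding NE_def by simp
  have Ln: "Linf_pm1 n" using Mn unfolding M1_def by simp
  obtain \<xi>0' where NEn: "NE n \<xi>0'" using M1_NE[OF Mn] by blast
  have Fm: "F m \<xi>m = 0" using cm is_center_iff[OF Lm] by simp
  have Fn: "F n \<xi>n = 0" using cn is_center_iff[OF Ln] by simp
  obtain lv where lv: "L1_dist m n = ennreal lv" "0 \<le> lv" "lv < \<kappa> * r / (2 * Cw)"
    "\<bar>F n \<xi>m - F m \<xi>m\<bar> \<le> Cw * lv"
    using L1_est[OF Lm Ln d] by blast
  have Fnm: "\<bar>F n \<xi>m\<bar> \<le> Cw * lv" using lv(4) Fm by simp
  have "Cw * lv < Cw * (\<kappa> * r / (2 * Cw))" by (rule mult_strict_left_mono[OF lv(3) Cw_pos])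
  also have "\<dots> = \<kappa> * r / 2" using Cw_pos by simp
  finally have small: "\<bar>F n \<xi>m\<bar> < \<kappa> * r / 2" using Fnm by linarith
  have "\<bar>\<xi>m - \<xi>n\<bar> \<le> 2 / \<kappa> * \<bar>F n \<xi>m\<bar>" by (rule NE_key[OF NEn Fn small])
  also have "\<dots> \<le> 2 / \<kappa> * (Cw * lv)" using Fnm kappa_pos by (intro mult_left_mono) auto
  also have "\<dots> = (2 * Cw / \<kappa>) * lv" by simp
  also have "\<dots> \<le> c * lv" using c lv(2) by (intro mult_right_mono) auto
  finally have "\<bar>\<xi>m - \<xi>n\<bar> \<le> c * lv" .
  moreover have "c \<ge> 0"
  proof -
    have "2 * Cw / \<kappa> \<ge> 0" using Cw_pos kappa_pos by simp
    then show ?thesis using c by linarith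
  qed
  ultimately show ?thesis unfolding lv(1) using lv(2) by (simp add: ennreal_mult[symmetric] ennreal_leI)
qed

lemma part_b_L2:
  assumes NEm: "NE m \<xi>0" and Mn: "M1 mbar \<delta>0 n"
    and d: "L2sq_dist m n < ennreal ((\<kappa> * r / (4 * sqrt W2))\<^sup>2)"
    and cm: "is_center mbar m \<xi>m" and cn: "is_center mbar n \<xi>n"
    and c: "c \<ge> 2 * sqrt W2 / \<kappa>"
  shows "ennreal ((\<xi>m - \<xi>n)\<^sup>2) \<le> ennreal (c\<^sup>2) * L2sq_dist m n"
proof -
  define \<epsilon> where "\<epsilon> = \<kappa> * r / (4 * sqrt W2)"
  have eps: "\<epsilon> > 0" unfolding \<epsilon>_def using kappa_pos r_pos W2_pos by simp
  have eps2: "2 * \<epsilon> * sqrt W2 = \<kappa> * r / 2" unfolding \<epsilon>_def using W2_pos by simp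
  have Lm: "Linf_pm1 m" using NEm unfolding NE_def by simp
  have Ln: "Linf_pm1 n" using Mn unfolding M1_def by simp
  obtain \<xi>0' where NEn: "NE n \<xi>0'" using M1_NE[OF Mn] by blast
  have Fm: "F m \<xi>m = 0" using cm is_center_iff[OF Lm] by simp
  have Fn: "F n \<xi>n = 0" using cn is_center_iff[OF Ln] by simp
  obtain lv where lv: "L2sq_dist m n = ennreal lv" "0 \<le> lv" "lv < \<epsilon>\<^sup>2"
    "\<forall>A>0. lv \<le> A\<^sup>2 \<longrightarrow> \<bar>F n \<xi>m - F m \<xi>m\<bar> \<le> A * sqrt W2"
    using L2_est[OF Lm Ln d[folded \<epsilon>_def]] by blast
  define K where "K = 4 * W2 / \<kappa>\<^sup>2"
  have K: "K > 0" unfolding K_def using W2_pos kappa_pos by simp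
  have main: "(\<xi>m - \<xi>n)\<^sup>2 \<le> K * lv + e" if e: "e > 0" for e
  proof -
    define \<eta> where "\<eta> = min (\<epsilon>\<^sup>2) (e / K)"
    have eta: "\<eta> > 0" "\<eta> \<le> \<epsilon>\<^sup>2" "\<eta> \<le> e / K" using eps e K by (auto simp: \<eta>_def)
    define A where "A = sqrt (lv + \<eta>)"
    have A: "A > 0" unfolding A_def using lv(2) eta by simp
    have A2: "A\<^sup>2 = lv + \<eta>" unfolding A_def using lv(2) eta by simp
    have FA: "\<bar>F n \<xi>m\<bar> \<le> A * sqrt W2" using lv(4) A A2 Fm eta by simp
    have "lv + \<eta> < (2 * \<epsilon>)\<^sup>2" using lv(3) eta eps by (simp add: power_mult_distrib)
    then have "A < 2 * \<epsilon>" unfolding A_def using eps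
      by (metis real_sqrt_less_mono real_sqrt_abs abs_of_pos mult_pos_pos zero_less_numeral)
    then have "A * sqrt W2 < 2 * \<epsilon> * sqrt W2" using W2_pos by simp
    then have small: "\<bar>F n \<xi>m\<bar> < \<kappa> * r / 2" using FA eps2 by linarith
    have "\<bar>\<xi>m - \<xi>n\<bar> \<le> 2 / \<kappa> * \<bar>F n \<xi>m\<bar>" by (rule NE_key[OF NEn Fn small])
    also have "\<dots> \<le> 2 / \<kappa> * (A * sqrt W2)" using FA kappa_pos by (intro mult_left_mono) auto
    finally have "(\<xi>m - \<xi>n)\<^sup>2 \<le> (2 / \<kappa> * (A * sqrt W2))\<^sup>2" by (rule sq_le)
    also have "\<dots> = K * A\<^sup>2" unfolding K_def using W2_pos kappa_pos
      by (simp add: power_mult_distrib power_divide)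
    also have "\<dots> = K * lv + K * \<eta>" unfolding A2 by (simp add: algebra_simps)
    also have "K * \<eta> \<le> K * (e / K)" using eta K by (intro mult_left_mono) auto
    then have "K * lv + K * \<eta> \<le> K * lv + e" using K by simp
    finally show ?thesis .
  qed
  have "(\<xi>m - \<xi>n)\<^sup>2 \<le> K * lv" by (rule field_le_epsilon) (rule main)
  also have "K * lv \<le> c\<^sup>2 * lv"
  proof (rule mult_right_mono[OF _ lv(2)])
    have "0 \<le> 2 * sqrt W2 / \<kappa>" using W2_pos kappa_pos by simp
    then have "(2 * sqrt W2 / \<kappa>)\<^sup>2 \<le> c\<^sup>2" using c by (intro power_mono) auto
    moreover have "(2 * sqrt W2 / \<kappa>)\<^sup>2 = K" unfolding K_def using W2_pos
      by (simp add: power_mult_distrib power_divide)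
    ultimately show "K \<le> c\<^sup>2" by simp
  qed
  finally have "(\<xi>m - \<xi>n)\<^sup>2 \<le> c\<^sup>2 * lv" .
  then show ?thesis unfolding lv(1) using lv(2) by (simp add: ennreal_mult[symmetric] ennreal_leI)
qed

lemma main_result:
  "(\<forall>m. classN m \<longrightarrow> (\<exists>\<xi>. is_center mbar m \<xi>))
       \<and> (\<exists>c \<delta>. c > 0 \<and> \<delta> > 0 \<and>
            (\<forall>m. M1 mbar \<delta> m \<longrightarrow>
               (\<exists>!\<xi>. is_center mbar m \<xi>)
             \<and> (\<exists>\<epsilon>>0. \<forall>n \<xi>m \<xi>n. M1 mbar \<delta> n \<and> L1_dist m n < ennreal \<epsilon>
                    \<and> is_center mbar m \<xi>m \<and> is_center mbar n \<xi>n
                    \<longrightarrow> ennreal \<bar>\<xi>m - \<xi>n\<bar> \<le> ennreal c * L1_dist m n)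
             \<and> (\<exists>\<epsilon>>0. \<forall>n \<xi>m \<xi>n. M1 mbar \<delta> n \<and> L2sq_dist m n < ennreal (\<epsilon>\<^sup>2)
                    \<and> is_center mbar m \<xi>m \<and> is_center mbar n \<xi>n
                    \<longrightarrow> ennreal ((\<xi>m - \<xi>n)\<^sup>2) \<le> ennreal (c\<^sup>2) * L2sq_dist m n)))"
proof (intro conjI allI impI)
  fix m assume cm: "classN m"
  then have L: "Linf_pm1 m" unfolding classN_def by simp
  show "\<exists>\<xi>. is_center mbar m \<xi>" using classN_center[OF cm] is_center_iff[OF L] by blast
next
  define c where "c = max (2 * Cw / \<kappa>) (2 * sqrt W2 / \<kappa>)"
  have c0: "c > 0" unfolding c_def using Cw_pos kappa_pos by (simp add: less_max_iff_disj)
  have c1: "c \<ge> 2 * Cw / \<kappa>" "c \<ge> 2 * sqrt W2 / \<kappa>" unfolding c_def by auto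
  show "\<exists>c \<delta>. c > 0 \<and> \<delta> > 0 \<and>
            (\<forall>m. M1 mbar \<delta> m \<longrightarrow>
               (\<exists>!\<xi>. is_center mbar m \<xi>)
             \<and> (\<exists>\<epsilon>>0. \<forall>n \<xi>m \<xi>n. M1 mbar \<delta> n \<and> L1_dist m n < ennreal \<epsilon>
                    \<and> is_center mbar m \<xi>m \<and> is_center mbar n \<xi>n
                    \<longrightarrow> ennreal \<bar>\<xi>m - \<xi>n\<bar> \<le> ennreal c * L1_dist m n)
             \<and> (\<exists>\<epsilon>>0. \<forall>n \<xi>m \<xi>n. M1 mbar \<delta> n \<and> L2sq_dist m n < ennreal (\<epsilon>\<^sup>2)
                    \<and> is_center mbar m \<xi>m \<and> is_center mbar n \<xi>n
                    \<longrightarrow> ennreal ((\<xi>m - \<xi>n)\<^sup>2) \<le> ennreal (c\<^sup>2) * L2sq_dist m n))"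
  proof -
    have P: "(\<exists>!\<xi>. is_center mbar m \<xi>)
             \<and> (\<exists>\<epsilon>>0. \<forall>n \<xi>m \<xi>n. M1 mbar \<delta>0 n \<and> L1_dist m n < ennreal \<epsilon>
                    \<and> is_center mbar m \<xi>m \<and> is_center mbar n \<xi>n
                    \<longrightarrow> ennreal \<bar>\<xi>m - \<xi>n\<bar> \<le> ennreal c * L1_dist m n)
             \<and> (\<exists>\<epsilon>>0. \<forall>n \<xi>m \<xi>n. M1 mbar \<delta>0 n \<and> L2sq_dist m n < ennreal (\<epsilon>\<^sup>2)
                    \<and> is_center mbar m \<xi>m \<and> is_center mbar n \<xi>n
                    \<longrightarrow> ennreal ((\<xi>m - \<xi>n)\<^sup>2) \<le> ennreal (c\<^sup>2) * L2sq_dist m n)"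
      if Mm: "M1 mbar \<delta>0 m" for m
    proof -
      obtain \<xi>0 where NEm: "NE m \<xi>0" using M1_NE[OF Mm] by blast
      have Lm: "Linf_pm1 m" using Mm unfolding M1_def by simp
      obtain \<xi> where z: "F m \<xi> = 0" using NE_exists[OF NEm] by blast
      have u: "\<And>\<xi>'. F m \<xi>' = 0 \<Longrightarrow> \<xi>' = \<xi>" using NE_unique[OF NEm] z by blast
      have A: "\<exists>!\<xi>. is_center mbar m \<xi>" unfolding is_center_iff[OF Lm] using z u by blast
      have B: "\<exists>\<epsilon>>0. \<forall>n \<xi>m \<xi>n. M1 mbar \<delta>0 n \<and> L1_dist m n < ennreal \<epsilon>
                    \<and> is_center mbar m \<xi>m \<and> is_center mbar n \<xi>n
                    \<longrightarrow> ennreal \<bar>\<xi>m - \<xi>n\<bar> \<le> ennreal c * L1_dist m n"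
        by (rule exI[of _ "\<kappa> * r / (2 * Cw)"])
           (use kappa_pos r_pos Cw_pos part_b_L1[OF NEm _ _ _ _ c1(1)] in auto)
      have C: "\<exists>\<epsilon>>0. \<forall>n \<xi>m \<xi>n. M1 mbar \<delta>0 n \<and> L2sq_dist m n < ennreal (\<epsilon>\<^sup>2)
                    \<and> is_center mbar m \<xi>m \<and> is_center mbar n \<xi>n
                    \<longrightarrow> ennreal ((\<xi>m - \<xi>n)\<^sup>2) \<le> ennreal (c\<^sup>2) * L2sq_dist m n"
        by (rule exI[of _ "\<kappa> * r / (4 * sqrt W2)"])
           (use kappa_pos r_pos W2_pos part_b_L2[OF NEm _ _ _ _ c1(2)] in auto)
      show ?thesis using A B C by blast
    qed
    show ?thesis using P c0 delta0_pos by blast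
  qed
qed

end


theorem lemmaB1:
  fixes \<beta> m\<beta> :: real and J mbar :: "real \<Rightarrow> real"
  assumes beta: "\<beta> > 1"
    and J_C2: "\<exists>J' J''. (\<forall>x. (J has_real_derivative J' x) (at x)
                 \<and> (J' has_real_derivative J'' x) (at x)) \<and> continuous_on UNIV J''"
    and J_even: "\<forall>r. J (- r) = J r"
    and J_supp: "\<forall>r. \<bar>r\<bar> > 1 \<longrightarrow> J r = 0"
    and J_int: "(J has_integral 1) UNIV"
    and J_noninc: "\<forall>r s. 0 < r \<and> r \<le> s \<longrightarrow> J s \<le> J r"
    and mb_pos: "m\<beta> > 0"
    and mb_eq: "m\<beta> = tanh (\<beta> * m\<beta>)"
    and mbar_eq: "\<forall>x. mbar x = tanh (\<beta> * (LINT y|lborel. J (x - y) * mbar y))"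
    and mbar_incr: "strict_mono mbar"
    and mbar_odd: "\<forall>x. mbar (- x) = - mbar x"
    and mbar_top: "(mbar \<longlongrightarrow> m\<beta>) at_top"
    and mbar_bot: "(mbar \<longlongrightarrow> - m\<beta>) at_bot"
    and mbar_diff: "\<forall>x. mbar differentiable (at x)"
    and mbar_decay: "\<exists>C a. C > 0 \<and> a > 0 \<and> (\<forall>x. \<bar>deriv mbar x\<bar> \<le> C * exp (- a * \<bar>x\<bar>))"
  shows "(\<forall>m. classN m \<longrightarrow> (\<exists>\<xi>. is_center mbar m \<xi>))
       \<and> (\<exists>c \<delta>. c > 0 \<and> \<delta> > 0 \<and>
            (\<forall>m. M1 mbar \<delta> m \<longrightarrow>
               (\<exists>!\<xi>. is_center mbar m \<xi>)
             \<and> (\<exists>\<epsilon>>0. \<forall>n \<xi>m \<xi>n. M1 mbar \<delta> n \<and> L1_dist m n < ennreal \<epsilon>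
                    \<and> is_center mbar m \<xi>m \<and> is_center mbar n \<xi>n
                    \<longrightarrow> ennreal \<bar>\<xi>m - \<xi>n\<bar> \<le> ennreal c * L1_dist m n)
             \<and> (\<exists>\<epsilon>>0. \<forall>n \<xi>m \<xi>n. M1 mbar \<delta> n \<and> L2sq_dist m n < ennreal (\<epsilon>\<^sup>2)
                    \<and> is_center mbar m \<xi>m \<and> is_center mbar n \<xi>n
                    \<longrightarrow> ennreal ((\<xi>m - \<xi>n)\<^sup>2) \<le> ennreal (c\<^sup>2) * L2sq_dist m n)))"
proof -
  obtain J' J'' where JJ: "\<forall>x. (J has_real_derivative J' x) (at x) \<and> (J' has_real_derivative J'' x) (at x)"
    and J''c: "continuous_on UNIV J''" using J_C2 by blast
  obtain C a where Ca: "C > 0" "a > 0" "\<forall>x. \<bar>deriv mbar x\<bar> \<le> C * exp (- a * \<bar>x\<bar>)"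
    using mbar_decay by blast
  interpret front \<beta> m\<beta> J mbar J' J'' C a
  proof
    show "\<And>x. (J has_real_derivative J' x) (at x)" using JJ by blast
    show "\<And>x. (J' has_real_derivative J'' x) (at x)" using JJ by blast
    show "continuous_on UNIV J''" by (rule J''c)
    show "\<And>r. \<bar>r\<bar> > 1 \<Longrightarrow> J r = 0" using J_supp by blast
    show "m\<beta> > 0" by (rule mb_pos)
    show "m\<beta> = tanh (\<beta> * m\<beta>)" by (rule mb_eq)
    show "\<And>x. mbar x = tanh (\<beta> * (LINT y|lborel. J (x - y) * mbar y))" using mbar_eq by blast
    show "strict_mono mbar" by (rule mbar_incr)
    show "\<And>x. mbar (- x) = - mbar x" using mbar_odd by blast
    show "(mbar \<longlongrightarrow> m\<beta>) at_top" by (rule mbar_top)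
    show "\<And>x. mbar differentiable (at x)" using mbar_diff by blast
    show "C > 0" "a > 0" using Ca by auto
    show "\<And>x. \<bar>deriv mbar x\<bar> \<le> C * exp (- a * \<bar>x\<bar>)" using Ca by blast
  qed
  show ?thesis by (rule main_result)
qed

end
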